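(* Let $[\mathcal{F}],[\mathcal{E}]$ be two $\mathrm{PGL}(4)$-classes of tetrahedra of flags that are $(\sigma,\tau)$-glueable, and let $\mathcal{G}=\{[(\mathcal{F}',\mathcal{E}')]\in\mathcal{FL}_{\sigma,\tau}:\mathcal{F}'\in[\mathcal{F}],\ \mathcal{E}'\in[\mathcal{E}]\}$. Then the gluing parameter $g_\sigma^\tau$ restricted to $\mathcal{G}$ is a homeomorphism $\mathcal{G}\to\mathbb{R}^\times$.
   Context: Flags: $(V,\eta)$ with $\eta$ a plane of $\mathbb{RP}^3$ through $V$. Tetrahedron of flags: non-degenerate ($\eta_i(V_j)=0\iff i=j$) ordered quadruple $(V_m,\eta_m)_{m=1}^4$, $V_m$ not coplanar, with some projective tetrahedron with vertices $V_m$ whose interior misses all $\eta_m$. Edge-faces $\sigma=(ij)k$ are even permutations $[ijkl]$ of $\{1,2,3,4\}$. $\mathcal{F}=(V_m,\eta_m)$ and $\mathcal{E}=(W_m,\zeta_m)$ are glued along $(\sigma,\tau)$, $\sigma=(ij)k$ ($=[ijkl]$), $\tau=(i'j')k'$ ($=[i'j'k'l']$), if $(V_i,\eta_i)=(W_{j'},\zeta_{j'})$, $(V_j,\eta_j)=(W_{i'},\zeta_{i'})$, $(V_k,\eta_k)=(W_{k'},\zeta_{k'})$; classes are $(\sigma,\tau)$-glueable if they have such representatives. $\mathrm{FL}_{\sigma,\tau}$ is the set of pairs glued along $(\sigma,\tau)$ and $\mathcal{FL}_{\sigma,\tau}$ its quotient by diagonal $\mathrm{PGL}(4)$ (quotient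 topology). The gluing parameter of $(\mathcal{F},\mathcal{E})\in\mathrm{FL}_{\sigma,\tau}$ is $g^{\mathcal{E},\tau}_{\mathcal{F},\sigma}=-\frac{\bar\eta_i(\bar V_l)\,\bar\eta_j(\bar V_k)\,\bar\eta_{ijk}(\bar W_{l'})}{\bar\eta_i(\bar V_k)\,\bar\eta_j(\bar W_{l'})\,\bar\eta_{ijk}(\bar V_l)}$, where $\eta_{ijk}$ is the plane spanned by $V_i,V_j,V_k$ and bars denote representatives in $\mathbb{R}^4$, $(\mathbb{R}^4)^*$; it is $\mathrm{PGL}(4)$-invariant and defines $g_\sigma^\tau:\mathcal{FL}_{\sigma,\tau}\to\mathbb{R}^\times$. *)

theory Defs
  imports "HOL-Analysis.Analysis" "HOL-Combinatorics.Permutations"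
begin

text \<open>Points of RP^3 and planes of RP^3 are represented by nonzero vectors of
  real^4 (covectors are identified with vectors via the inner product).
  A tetrahedron of flags is represented by a pair (V, H) of 4x4 arrays:
  V $ m is a representative of the vertex V_m, H $ m of the plane eta_m.
  The four labels 1..4 are the four elements 1, 2, 3, 4 (= 0) of type 4.\<close>

type_synonym tet = "(real^4^4) \<times> (real^4^4)"

definition proj_eq :: "real^4 \<Rightarrow> real^4 \<Rightarrow> bool" where
  "proj_eq u v \<longleftrightarrow> (\<exists>a. a \<noteq> 0 \<and> u = a *\<^sub>R v)"

definition is_flag :: "real^4 \<Rightarrow> real^4 \<Rightarrow> bool" where
  "is_flag v h \<longleftrightarrow> v \<noteq> 0 \<and> h \<noteq> 0 \<and> h \<bullet> v = 0"

definition tetrahedron_of_flags :: "tet \<Rightarrow> bool" where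
  "tetrahedron_of_flags T \<longleftrightarrow>
     (let V = fst T; H = snd T in
       (\<forall>m. is_flag (V $ m) (H $ m)) \<and>
       (\<forall>i j. H $ i \<bullet> V $ j = 0 \<longleftrightarrow> i = j) \<and>
       \<not> (\<exists>f::real^4. f \<noteq> 0 \<and> (\<forall>m. f \<bullet> V $ m = 0)) \<and>
       (\<exists>s::4 \<Rightarrow> real. (\<forall>m. s m = 1 \<or> s m = -1) \<and>
          (\<forall>k (t::4 \<Rightarrow> real). (\<forall>m. t m > 0) \<longrightarrow>
              H $ k \<bullet> (\<Sum>m\<in>UNIV. (t m * s m) *\<^sub>R V $ m) \<noteq> 0)))"

definition pgl_act :: "real^4^4 \<Rightarrow> tet \<Rightarrow> tet" where
  "pgl_act A T = ((\<chi> m. A *v (fst T $ m)), (\<chi> m. (snd T $ m) v* matrix_inv A))"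

definition same_flags :: "tet \<Rightarrow> tet \<Rightarrow> bool" where
  "same_flags T T' \<longleftrightarrow>
     (\<forall>m. proj_eq (fst T $ m) (fst T' $ m) \<and> proj_eq (snd T $ m) (snd T' $ m))"

definition pgl_equiv :: "tet \<Rightarrow> tet \<Rightarrow> bool" where
  "pgl_equiv T T' \<longleftrightarrow> (\<exists>A. invertible A \<and> same_flags T' (pgl_act A T))"

definition pgl_equiv2 :: "tet \<times> tet \<Rightarrow> tet \<times> tet \<Rightarrow> bool" where
  "pgl_equiv2 x y \<longleftrightarrow> (\<exists>A. invertible A \<and>
      same_flags (fst y) (pgl_act A (fst x)) \<and> same_flags (snd y) (pgl_act A (snd x)))"

text \<open>Edge-faces: even permutations [ijkl], i.e. p 1 = i, p 2 = j, p 3 = k, p 4 = l.\<close>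
definition edge_face :: "(4 \<Rightarrow> 4) \<Rightarrow> bool" where
  "edge_face p \<longleftrightarrow> p permutes UNIV \<and> evenperm p"

definition glued :: "(4 \<Rightarrow> 4) \<Rightarrow> (4 \<Rightarrow> 4) \<Rightarrow> tet \<Rightarrow> tet \<Rightarrow> bool" where
  "glued p q F E \<longleftrightarrow>
     proj_eq (fst F $ p 1) (fst E $ q 2) \<and> proj_eq (snd F $ p 1) (snd E $ q 2) \<and>
     proj_eq (fst F $ p 2) (fst E $ q 1) \<and> proj_eq (snd F $ p 2) (snd E $ q 1) \<and>
     proj_eq (fst F $ p 3) (fst E $ q 3) \<and> proj_eq (snd F $ p 3) (snd E $ q 3)"

definition FL_rep :: "(4 \<Rightarrow> 4) \<Rightarrow> (4 \<Rightarrow> 4) \<Rightarrow> (tet \<times> tet) set" where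
  "FL_rep p q = {(F, E). tetrahedron_of_flags F \<and> tetrahedron_of_flags E \<and> glued p q F E}"

definition FL_rel :: "(4 \<Rightarrow> 4) \<Rightarrow> (4 \<Rightarrow> 4) \<Rightarrow> ((tet \<times> tet) \<times> (tet \<times> tet)) set" where
  "FL_rel p q = {(x, y). x \<in> FL_rep p q \<and> y \<in> FL_rep p q \<and> pgl_equiv2 x y}"

definition quotient_top :: "'a topology \<Rightarrow> ('a \<times> 'a) set \<Rightarrow> 'a set topology" where
  "quotient_top X r = topology (\<lambda>U. U \<subseteq> topspace X // r \<and> openin X (\<Union>U))"

definition FLq :: "(4 \<Rightarrow> 4) \<Rightarrow> (4 \<Rightarrow> 4) \<Rightarrow> (tet \<times> tet) set topology" where
  "FLq p q = quotient_top (subtopology euclidean (FL_rep p q)) (FL_rel p q)"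

definition plane_cov :: "real^4 \<Rightarrow> real^4 \<Rightarrow> real^4 \<Rightarrow> real^4" where
  "plane_cov a b c = (SOME f. f \<noteq> 0 \<and> f \<bullet> a = 0 \<and> f \<bullet> b = 0 \<and> f \<bullet> c = 0)"

definition gpar :: "(4 \<Rightarrow> 4) \<Rightarrow> (4 \<Rightarrow> 4) \<Rightarrow> tet \<times> tet \<Rightarrow> real" where
  "gpar p q x =
     (let V = fst (fst x); H = snd (fst x); W = fst (snd x);
          i = p 1; j = p 2; k = p 3; l = p 4; l' = q 4;
          N = plane_cov (V $ i) (V $ j) (V $ k)
      in - ((H $ i \<bullet> V $ l) * (H $ j \<bullet> V $ k) * (N \<bullet> W $ l')) /
           ((H $ i \<bullet> V $ k) * (H $ j \<bullet> W $ l') * (N \<bullet> V $ l)))"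

definition gluing_param :: "(4 \<Rightarrow> 4) \<Rightarrow> (4 \<Rightarrow> 4) \<Rightarrow> (tet \<times> tet) set \<Rightarrow> real" where
  "gluing_param p q c = the_elem (gpar p q ` c)"

definition Gset :: "(4 \<Rightarrow> 4) \<Rightarrow> (4 \<Rightarrow> 4) \<Rightarrow> tet \<Rightarrow> tet \<Rightarrow> (tet \<times> tet) set set" where
  "Gset p q F E = {c \<in> FL_rep p q // FL_rel p q.
      \<exists>x\<in>c. pgl_equiv F (fst x) \<and> pgl_equiv E (snd x)}"

end

theory Submission
  imports Defs
begin


lemma proj_eq_refl: "proj_eq v v"
  unfolding proj_eq_def by (rule exI[of _ 1]) simp

lemma proj_eq_sym: "proj_eq u v \<Longrightarrow> proj_eq v u"
  unfolding proj_eq_def by (metis divideR_right scaleR_left.zero zero_neq_numeral divide_eq_0_iff one_neq_zero)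

lemma proj_eq_trans: "proj_eq u v \<Longrightarrow> proj_eq v w \<Longrightarrow> proj_eq u w"
  unfolding proj_eq_def by (metis mult_eq_0_iff scaleR_scaleR)

lemma proj_eq_scale: "a \<noteq> 0 \<Longrightarrow> proj_eq (a *\<^sub>R u) u"
  unfolding proj_eq_def by blast

lemma proj_eq_zero: "proj_eq u v \<Longrightarrow> (u = 0 \<longleftrightarrow> v = 0)"
  unfolding proj_eq_def by auto

lemma mv_scaleR: "(A::real^4^4) *v (a *\<^sub>R v) = a *\<^sub>R (A *v v)"
  by (simp add: vec_eq_iff matrix_vector_mult_def sum_distrib_left algebra_simps)

lemma vm_scaleR: "(a *\<^sub>R v) v* (A::real^4^4) = a *\<^sub>R (v v* A)"
  by (simp add: vec_eq_iff vector_matrix_mult_def sum_distrib_left algebra_simps)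

lemma proj_eq_mv: "proj_eq u v \<Longrightarrow> proj_eq ((A::real^4^4) *v u) (A *v v)"
  unfolding proj_eq_def by (metis mv_scaleR)

lemma proj_eq_vm: "proj_eq u v \<Longrightarrow> proj_eq (u v* (A::real^4^4)) (v v* A)"
  unfolding proj_eq_def by (metis vm_scaleR)

lemma proj_eq_inner1: "proj_eq u v \<Longrightarrow> (inner u w = 0 \<longleftrightarrow> inner v w = 0)"
  unfolding proj_eq_def by auto

lemma proj_eq_inner2: "proj_eq u v \<Longrightarrow> (inner w u = 0 \<longleftrightarrow> inner w v = 0)"
  unfolding proj_eq_def by auto

lemma proj_eqE: assumes "proj_eq u v" obtains a where "a \<noteq> 0" "u = a *\<^sub>R v"
  using assms unfolding proj_eq_def by blast

subsection \<open>Matrix inverses\<close>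

lemma minv: "invertible (A::real^4^4) \<Longrightarrow> A ** matrix_inv A = mat 1 \<and> matrix_inv A ** A = mat 1"
  unfolding invertible_def matrix_inv_def by (rule someI_ex)

lemma minv_unique:
  assumes "(A::real^4^4) ** B = mat 1" "B ** A = mat 1"
  shows "matrix_inv A = B"
proof -
  have inv: "invertible A" using assms unfolding invertible_def by blast
  have "matrix_inv A = (B ** A) ** matrix_inv A" using assms by simp
  also have "\<dots> = B ** (A ** matrix_inv A)" by (simp add: matrix_mul_assoc)
  also have "\<dots> = B" using minv[OF inv] by simp
  finally show ?thesis .
qed

lemma invertible_minv: "invertible (A::real^4^4) \<Longrightarrow> invertible (matrix_inv A)"
  using minv unfolding invertible_def by blast

lemma minv_minv: "invertible (A::real^4^4) \<Longrightarrow> matrix_inv (matrix_inv A) = A"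
  using minv minv_unique by blast

lemma invertible_mult: "invertible (A::real^4^4) \<Longrightarrow> invertible (B::real^4^4) \<Longrightarrow> invertible (A ** B)"
proof -
  assume a: "invertible A" and b: "invertible B"
  have "(A ** B) ** (matrix_inv B ** matrix_inv A) = mat 1"
    using minv[OF a] minv[OF b] by (metis matrix_mul_assoc matrix_mul_rid)
  moreover have "(matrix_inv B ** matrix_inv A) ** (A ** B) = mat 1"
    using minv[OF a] minv[OF b] by (metis matrix_mul_assoc matrix_mul_rid)
  ultimately show ?thesis unfolding invertible_def by blast
qed

lemma minv_mult: "invertible (A::real^4^4) \<Longrightarrow> invertible (B::real^4^4) \<Longrightarrow>
   matrix_inv (A ** B) = matrix_inv B ** matrix_inv A"
proof -
  assume a: "invertible A" and b: "invertible B"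
  have "(A ** B) ** (matrix_inv B ** matrix_inv A) = mat 1"
    using minv[OF a] minv[OF b] by (metis matrix_mul_assoc matrix_mul_rid)
  moreover have "(matrix_inv B ** matrix_inv A) ** (A ** B) = mat 1"
    using minv[OF a] minv[OF b] by (metis matrix_mul_assoc matrix_mul_rid)
  ultimately show ?thesis by (rule minv_unique)
qed

lemma invertible_id: "invertible (mat 1 :: real^4^4)"
  unfolding invertible_def by (rule exI[of _ "mat 1"]) simp

lemma minv_id: "matrix_inv (mat 1 :: real^4^4) = mat 1"
  by (rule minv_unique) simp_all

lemma minv_mv: "invertible (A::real^4^4) \<Longrightarrow> matrix_inv A *v (A *v v) = v"
  by (simp add: matrix_vector_mul_assoc minv)

lemma minv_vm: "invertible (A::real^4^4) \<Longrightarrow> (h v* matrix_inv A) v* A = h"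
  by (simp add: vector_matrix_mul_assoc minv)

lemma minv_vm2: "invertible (A::real^4^4) \<Longrightarrow> (h v* A) v* matrix_inv A = h"
  by (simp add: vector_matrix_mul_assoc minv)

lemma mv_zero_iff: "invertible (A::real^4^4) \<Longrightarrow> (A *v v = 0 \<longleftrightarrow> v = 0)"
  by (metis minv_mv matrix_vector_mult_0_right)

lemma vm_zero_iff: "invertible (A::real^4^4) \<Longrightarrow> (h v* A = 0 \<longleftrightarrow> h = 0)"
  by (metis minv_vm2 vector_matrix_mult_0)

lemma inner_vm_mv: "invertible (A::real^4^4) \<Longrightarrow> inner (h v* matrix_inv A) (A *v v) = inner h v"
  by (simp add: dot_lmul_matrix matrix_vector_mul_assoc minv)

lemma act_iff: "same_flags T' (pgl_act A T) \<longleftrightarrow>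
  (\<forall>m. proj_eq (fst T' $ m) (A *v (fst T $ m)) \<and> proj_eq (snd T' $ m) (snd T $ m v* matrix_inv A))"
  by (simp add: same_flags_def pgl_act_def)

lemma act_id: "same_flags T' (pgl_act (mat 1) T) \<longleftrightarrow> same_flags T' T"
  by (simp add: same_flags_def pgl_act_def minv_id)

lemma same_flags_refl: "same_flags T T"
  by (simp add: same_flags_def proj_eq_refl)

lemma act_trans:
  assumes "invertible (A::real^4^4)" "invertible B"
    "same_flags T1 (pgl_act A T)" "same_flags T2 (pgl_act B T1)"
  shows "same_flags T2 (pgl_act (B ** A) T)"
  unfolding act_iff
proof
  fix m
  have 1: "proj_eq (fst T1 $ m) (A *v (fst T $ m))" "proj_eq (snd T1 $ m) (snd T $ m v* matrix_inv A)"
    using assms(3) unfolding act_iff by auto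
  have 2: "proj_eq (fst T2 $ m) (B *v (fst T1 $ m))" "proj_eq (snd T2 $ m) (snd T1 $ m v* matrix_inv B)"
    using assms(4) unfolding act_iff by auto
  show "proj_eq (fst T2 $ m) ((B ** A) *v fst T $ m) \<and>
        proj_eq (snd T2 $ m) (snd T $ m v* matrix_inv (B ** A))"
    using proj_eq_trans[OF 2(1) proj_eq_mv[OF 1(1)]] proj_eq_trans[OF 2(2) proj_eq_vm[OF 1(2)]]
    by (simp add: matrix_vector_mul_assoc vector_matrix_mul_assoc minv_mult assms)
qed

lemma act_sym:
  assumes "invertible (A::real^4^4)" "same_flags T' (pgl_act A T)"
  shows "same_flags T (pgl_act (matrix_inv A) T')"
  unfolding act_iff
proof
  fix m
  have 1: "proj_eq (fst T' $ m) (A *v (fst T $ m))" "proj_eq (snd T' $ m) (snd T $ m v* matrix_inv A)"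
    using assms(2) unfolding act_iff by auto
  show "proj_eq (fst T $ m) (matrix_inv A *v fst T' $ m) \<and>
        proj_eq (snd T $ m) (snd T' $ m v* matrix_inv (matrix_inv A))"
    using proj_eq_sym[OF proj_eq_mv[OF 1(1), of "matrix_inv A"]]
      proj_eq_sym[OF proj_eq_vm[OF 1(2), of A]]
    by (simp add: minv_mv minv_vm minv_minv assms)
qed

lemma pgl_equiv_refl: "pgl_equiv T T"
  unfolding pgl_equiv_def using invertible_id act_id same_flags_refl by blast

lemma pgl_equiv_sym: "pgl_equiv T T' \<Longrightarrow> pgl_equiv T' T"
  unfolding pgl_equiv_def using act_sym invertible_minv by blast

lemma pgl_equiv_trans: "pgl_equiv T T1 \<Longrightarrow> pgl_equiv T1 T2 \<Longrightarrow> pgl_equiv T T2"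
  unfolding pgl_equiv_def using act_trans invertible_mult by blast

lemma pgl_equiv2_refl: "pgl_equiv2 x x"
  unfolding pgl_equiv2_def using invertible_id act_id same_flags_refl by blast

lemma pgl_equiv2_sym: "pgl_equiv2 x y \<Longrightarrow> pgl_equiv2 y x"
  unfolding pgl_equiv2_def using act_sym invertible_minv by blast

lemma pgl_equiv2_trans: "pgl_equiv2 x y \<Longrightarrow> pgl_equiv2 y z \<Longrightarrow> pgl_equiv2 x z"
  unfolding pgl_equiv2_def using act_trans invertible_mult by meson



lemma ef_perm: "edge_face p \<Longrightarrow> p permutes UNIV" unfolding edge_face_def by simp

lemma ef_inj: "edge_face p \<Longrightarrow> p x = p y \<longleftrightarrow> x = y"
  using ef_perm permutes_inj by (metis injD)

lemma distinct4: "(1::4) \<noteq> 2" "(1::4) \<noteq> 3" "(1::4)\<noteq>4" "(2::4)\<noteq>3" "(2::4)\<noteq>4" "(3::4)\<noteq>4"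
  by simp_all

lemma ef_distinct:
  assumes "edge_face p"
  shows "p 1 \<noteq> p 2" "p 1 \<noteq> p 3" "p 1 \<noteq> p 4" "p 2 \<noteq> p 3" "p 2 \<noteq> p 4" "p 3 \<noteq> p 4"
        "p 2 \<noteq> p 1" "p 3 \<noteq> p 1" "p 4 \<noteq> p 1" "p 3 \<noteq> p 2" "p 4 \<noteq> p 2" "p 4 \<noteq> p 3"
  using ef_inj[OF assms] distinct4 by (metis)+

lemma ef_all:
  assumes "edge_face p"
  shows "(\<forall>m. P m) \<longleftrightarrow> P (p 1) \<and> P (p 2) \<and> P (p 3) \<and> P (p 4)"
proof -
  have "\<forall>m. \<exists>n. m = p n" using ef_perm[OF assms] permutes_surj by (metis surjD)
  then show ?thesis by (metis exhaust_4)
qed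

lemma ef_cases:
  assumes "edge_face p"
  shows "m = p 1 \<or> m = p 2 \<or> m = p 3 \<or> m = p 4"
  using ef_all[OF assms, of "\<lambda>m. m = p 1 \<or> m = p 2 \<or> m = p 3 \<or> m = p 4"] by blast

lemma tet_flag: "tetrahedron_of_flags T \<Longrightarrow> fst T $ m \<noteq> 0 \<and> snd T $ m \<noteq> 0"
  unfolding tetrahedron_of_flags_def Let_def by (drule conjunct1) (simp add: is_flag_def)

lemma tet_nd: "tetrahedron_of_flags T \<Longrightarrow> inner (snd T $ i) (fst T $ j) = 0 \<longleftrightarrow> i = j"
  unfolding tetrahedron_of_flags_def Let_def by (drule conjunct2, drule conjunct1) simp

lemma tet_ncop: "tetrahedron_of_flags T \<Longrightarrow> (\<forall>m. inner f (fst T $ m) = 0) \<Longrightarrow> f = 0"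
  unfolding tetrahedron_of_flags_def Let_def by (drule conjunct2, drule conjunct2, drule conjunct1) blast

lemma tet_sign_raw: "tetrahedron_of_flags T \<Longrightarrow> \<exists>s::4\<Rightarrow>real. (\<forall>m. s m = 1 \<or> s m = -1) \<and>
          (\<forall>k (t::4 \<Rightarrow> real). (\<forall>m. t m > 0) \<longrightarrow>
              inner (snd T $ k) (\<Sum>m\<in>UNIV. (t m * s m) *\<^sub>R fst T $ m) \<noteq> 0)"
  unfolding tetrahedron_of_flags_def Let_def by (drule conjunct2, drule conjunct2, drule conjunct2) assumption

lemma inner_sum_expand: "inner h (\<Sum>m\<in>UNIV. (c m) *\<^sub>R (V::real^4^4) $ m) = (\<Sum>m\<in>UNIV. c m * inner h (V $ m))"
  by (simp add: inner_sum_right)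

lemma tet_sign:
  assumes "tetrahedron_of_flags T"
  obtains s where "\<forall>m. s m = 1 \<or> s m = -1"
    "\<And>k t. (\<forall>m. t m > 0) \<Longrightarrow> (\<Sum>m\<in>UNIV. t m * s m * inner (snd T $ k) (fst T $ m)) \<noteq> 0"
proof -
  obtain s where s: "\<forall>m. s m = 1 \<or> s m = -1"
    "\<forall>k (t::4 \<Rightarrow> real). (\<forall>m. t m > 0) \<longrightarrow>
              inner (snd T $ k) (\<Sum>m\<in>UNIV. (t m * s m) *\<^sub>R fst T $ m) \<noteq> 0"
    using tet_sign_raw[OF assms] by (elim exE conjE)
  have "(\<Sum>m\<in>UNIV. t m * s m * inner (snd T $ k) (fst T $ m)) \<noteq> 0" if "\<forall>m. t m > 0" for k t
    using s(2) that unfolding inner_sum_expand by blast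
  then show ?thesis using that[of s] s(1) by blast
qed

lemma tet_intro:
  assumes "\<And>m. fst T $ m \<noteq> 0" "\<And>m. snd T $ m \<noteq> 0"
    "\<And>i j. inner (snd T $ i) (fst T $ j) = 0 \<longleftrightarrow> i = j"
    "\<And>f. (\<forall>m. inner f (fst T $ m) = 0) \<Longrightarrow> f = 0"
    "\<forall>m. s m = 1 \<or> s m = -1"
    "\<And>k t. (\<forall>m. t m > 0) \<Longrightarrow> (\<Sum>m\<in>UNIV. t m * s m * inner (snd T $ k) (fst T $ m)) \<noteq> 0"
  shows "tetrahedron_of_flags T"
  unfolding tetrahedron_of_flags_def Let_def is_flag_def
  apply (intro conjI)
  subgoal using assms(1,2,3) by blast
  subgoal using assms(3) by blast
  subgoal using assms(4) by blast
  subgoal apply (rule exI[of _ s]) unfolding inner_sum_expand using assms(5,6) by (simp add: mult.assoc)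
  done

lemma act_coeffs:
  assumes "same_flags T' (pgl_act A T)"
  obtains a b where "\<And>m. a m \<noteq> 0" "\<And>m. b m \<noteq> 0"
    "\<And>m. fst T' $ m = a m *\<^sub>R (A *v fst T $ m)"
    "\<And>m. snd T' $ m = b m *\<^sub>R (snd T $ m v* matrix_inv A)"
proof -
  have "\<forall>m. \<exists>a. a \<noteq> 0 \<and> fst T' $ m = a *\<^sub>R (A *v fst T $ m)"
       "\<forall>m. \<exists>b. b \<noteq> 0 \<and> snd T' $ m = b *\<^sub>R (snd T $ m v* matrix_inv A)"
    using assms unfolding act_iff proj_eq_def by blast+
  then obtain a b where ab: "\<forall>m. a m \<noteq> 0 \<and> fst T' $ m = a m *\<^sub>R (A *v fst T $ m)"
     "\<forall>m. b m \<noteq> 0 \<and> snd T' $ m = b m *\<^sub>R (snd T $ m v* matrix_inv A)"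
    using choice[of "\<lambda>m a. a \<noteq> 0 \<and> fst T' $ m = a *\<^sub>R (A *v fst T $ m)"]
          choice[of "\<lambda>m b. b \<noteq> 0 \<and> snd T' $ m = b *\<^sub>R (snd T $ m v* matrix_inv A)"] by blast
  show ?thesis apply (rule that[of a b]) using ab by blast+
qed

lemma sgn_abs_real: "(t::real) * (s * sgn a) * (b * a * h) = b * ((t * \<bar>a\<bar>) * s * h)"
  by (simp add: abs_if sgn_real_def)

lemma tet_act:
  assumes T: "tetrahedron_of_flags T" and A: "invertible A" and R: "same_flags T' (pgl_act A T)"
  shows "tetrahedron_of_flags T'"
proof -
  obtain a b where ab: "\<And>m. a m \<noteq> 0" "\<And>m. b m \<noteq> 0"
    "\<And>m. fst T' $ m = a m *\<^sub>R (A *v fst T $ m)"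
    "\<And>m. snd T' $ m = b m *\<^sub>R (snd T $ m v* matrix_inv A)"
    using act_coeffs[OF R] by blast
  have key: "inner (snd T' $ k) (fst T' $ m) = b k * a m * inner (snd T $ k) (fst T $ m)" for k m
    using ab(3,4) inner_vm_mv[OF A] by simp
  obtain s where s: "\<forall>m. s m = 1 \<or> s m = -1"
    "\<And>k t. (\<forall>m. t m > 0) \<Longrightarrow> (\<Sum>m\<in>UNIV. t m * s m * inner (snd T $ k) (fst T $ m)) \<noteq> 0"
    using tet_sign[OF T] by blast
  show ?thesis
  proof (rule tet_intro[where s = "\<lambda>m. s m * sgn (a m)"])
    show "fst T' $ m \<noteq> 0" for m using ab(1,3) tet_flag[OF T] mv_zero_iff[OF A] by simp
    show "snd T' $ m \<noteq> 0" for m using ab(2,4) tet_flag[OF T] vm_zero_iff[OF invertible_minv[OF A]] by simp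
    show "inner (snd T' $ i) (fst T' $ j) = 0 \<longleftrightarrow> i = j" for i j
      using key ab(1,2) tet_nd[OF T] by simp
    show "f = 0" if "\<forall>m. inner f (fst T' $ m) = 0" for f
    proof -
      have "\<forall>m. inner (f v* A) (fst T $ m) = 0"
        using that ab(1,3) by (simp add: dot_lmul_matrix)
      then have "f v* A = 0" using tet_ncop[OF T] by blast
      then show ?thesis using vm_zero_iff[OF A] by simp
    qed
    show "\<forall>m. s m * sgn (a m) = 1 \<or> s m * sgn (a m) = -1"
      using s(1) ab(1) by (auto simp: sgn_real_def)
    show "(\<Sum>m\<in>UNIV. t m * (s m * sgn (a m)) * inner (snd T' $ k) (fst T' $ m)) \<noteq> 0"
      if "\<forall>m. t m > 0" for k t
    proof -
      have "(\<Sum>m\<in>UNIV. t m * (s m * sgn (a m)) * inner (snd T' $ k) (fst T' $ m))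
          = b k * (\<Sum>m\<in>UNIV. (t m * \<bar>a m\<bar>) * s m * inner (snd T $ k) (fst T $ m))"
        unfolding key sum_distrib_left
        by (rule sum.cong) (simp_all only: sgn_abs_real)
      moreover have "(\<Sum>m\<in>UNIV. (t m * \<bar>a m\<bar>) * s m * inner (snd T $ k) (fst T $ m)) \<noteq> 0"
        using s(2)[of "\<lambda>m. t m * \<bar>a m\<bar>"] that ab(1) by auto
      ultimately show ?thesis using ab(2) by simp
    qed
  qed
qed

lemma proj_eq_chain_mv:
  "proj_eq x ((A::real^4^4) *v u) \<Longrightarrow> proj_eq y (A *v v) \<Longrightarrow> proj_eq u v \<Longrightarrow> proj_eq x y"
  by (meson proj_eq_mv proj_eq_sym proj_eq_trans)

lemma proj_eq_chain_vm:
  "proj_eq x (u v* (A::real^4^4)) \<Longrightarrow> proj_eq y (v v* A) \<Longrightarrow> proj_eq u v \<Longrightarrow> proj_eq x y"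
  by (meson proj_eq_vm proj_eq_sym proj_eq_trans)

lemma glued_act:
  assumes "glued p q F E" "same_flags F' (pgl_act A F)" "same_flags E' (pgl_act A E)"
  shows "glued p q F' E'"
  using assms unfolding glued_def act_iff
  by (meson proj_eq_chain_mv proj_eq_chain_vm)

lemma glued_sf:
  assumes "glued p q F E" "same_flags F' F" "same_flags E' E"
  shows "glued p q F' E'"
  using glued_act[of p q F E F' "mat 1" E'] assms by (simp add: act_id)



lemma exists_normal: "\<exists>f::real^4. f \<noteq> 0 \<and> inner f a = 0 \<and> inner f b = 0 \<and> inner f c = 0"
proof -
  have "card {a,b,c} \<le> 3" by (auto simp: card_insert_if)
  then have "dim {a,b,c} < DIM(real^4)"
    using dim_le_card'[of "{a,b,c}"] by simp
  then obtain x where "x \<noteq> 0" "\<And>y. y \<in> span {a,b,c} \<Longrightarrow> orthogonal x y"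
    using orthogonal_to_subspace_exists by blast
  then show ?thesis by (auto simp: orthogonal_def span_base)
qed

lemma plane_cov: "plane_cov a b c \<noteq> 0 \<and> inner (plane_cov a b c) a = 0 \<and>
   inner (plane_cov a b c) b = 0 \<and> inner (plane_cov a b c) c = 0"
  unfolding plane_cov_def by (rule someI_ex[OF exists_normal])

lemma tet_span:
  assumes T: "tetrahedron_of_flags T"
  shows "\<exists>c. u = (\<Sum>m\<in>UNIV. c m *\<^sub>R fst T $ m)"
proof -
  let ?S = "range (\<lambda>m. fst T $ m)"
  let ?Q = "{u. \<exists>c. u = (\<Sum>m\<in>UNIV. c m *\<^sub>R fst T $ m)}"
  have spU: "span ?S = UNIV"
  proof (rule ccontr)
    assume "span ?S \<noteq> UNIV"
    then have "dim ?S < DIM(real^4)" using dim_eq_full dim_subset_UNIV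
      by (metis le_neq_implies_less)
    then obtain x where "x \<noteq> 0" "\<And>y. y \<in> span ?S \<Longrightarrow> orthogonal x y"
      using orthogonal_to_subspace_exists by blast
    then have "\<forall>m. inner x (fst T $ m) = 0" by (auto simp: orthogonal_def span_base)
    then show False using tet_ncop[OF T] \<open>x \<noteq> 0\<close> by blast
  qed
  have spQ: "span ?S \<subseteq> ?Q"
  proof (rule span_minimal)
    show "?S \<subseteq> ?Q"
    proof
      fix v assume "v \<in> ?S"
      then obtain m where v: "v = fst T $ m" by blast
      have "v = (\<Sum>n\<in>UNIV. (if n = m then 1 else 0) *\<^sub>R fst T $ n)"
      proof -
        have e: "(\<lambda>n. (if n = m then 1 else 0) *\<^sub>R fst T $ n) = (\<lambda>n. if n = m then fst T $ n else 0)"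
          by auto
        show ?thesis unfolding v e by simp
      qed
      then show "v \<in> ?Q" by (intro CollectI exI[of _ "\<lambda>n. if n = m then 1 else 0"])
    qed
    show "subspace ?Q"
      unfolding subspace_def
    proof (intro conjI ballI allI)
      show "0 \<in> ?Q" by (rule CollectI, rule exI[of _ "\<lambda>_. 0"]) simp
      fix x y assume "x \<in> ?Q" "y \<in> ?Q"
      then obtain c d where "x = (\<Sum>m\<in>UNIV. c m *\<^sub>R fst T $ m)" "y = (\<Sum>m\<in>UNIV. d m *\<^sub>R fst T $ m)"
        by blast
      then have "x + y = (\<Sum>m\<in>UNIV. (c m + d m) *\<^sub>R fst T $ m)"
        by (simp add: scaleR_add_left sum.distrib)
      then show "x + y \<in> ?Q" by (intro CollectI exI[of _ "\<lambda>m. c m + d m"])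
    next
      fix r x assume "x \<in> ?Q"
      then obtain c where "x = (\<Sum>m\<in>UNIV. c m *\<^sub>R fst T $ m)" by blast
      then have "r *\<^sub>R x = (\<Sum>m\<in>UNIV. (r * c m) *\<^sub>R fst T $ m)"
        by (simp add: scaleR_sum_right)
      then show "r *\<^sub>R x \<in> ?Q" by (intro CollectI exI[of _ "\<lambda>m. r * c m"])
    qed
  qed
  have "u \<in> span ?S" unfolding spU by (rule UNIV_I)
  then have "u \<in> ?Q" using spQ by (rule subsetD[rotated])
  then show ?thesis by (rule CollectD)
qed

lemma sum_perm4:
  assumes "edge_face p"
  shows "(\<Sum>m\<in>UNIV. f m) = f (p 1) + f (p 2) + f (p 3) + f (p 4)"
proof -
  have "(\<Sum>m\<in>UNIV. f m) = (\<Sum>m\<in>UNIV. (f \<circ> p) m)"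
    by (rule sum.permute[OF ef_perm[OF assms]])
  then show ?thesis by (simp add: sum_4)
qed

lemma normal_nz4:
  assumes T: "tetrahedron_of_flags T" and p: "edge_face p" and N: "N \<noteq> 0"
    "inner N (fst T $ p 1) = 0" "inner N (fst T $ p 2) = 0" "inner N (fst T $ p 3) = 0"
  shows "inner N (fst T $ p 4) \<noteq> 0"
  using tet_ncop[OF T, of N] ef_all[OF p, of "\<lambda>m. inner N (fst T $ m) = 0"] N by blast

lemma prop_normal:
  assumes T: "tetrahedron_of_flags T" and p: "edge_face p"
    and N: "inner N (fst T $ p 1) = 0" "inner N (fst T $ p 2) = 0" "inner N (fst T $ p 3) = 0"
       "inner N (fst T $ p 4) \<noteq> 0"
    and u: "inner u (fst T $ p 1) = 0" "inner u (fst T $ p 2) = 0" "inner u (fst T $ p 3) = 0"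
  shows "u = (inner u (fst T $ p 4) / inner N (fst T $ p 4)) *\<^sub>R N"
proof -
  define w where "w = u - (inner u (fst T $ p 4) / inner N (fst T $ p 4)) *\<^sub>R N"
  have wv: "inner w v = inner u v - (inner u (fst T $ p 4) / inner N (fst T $ p 4)) * inner N v" for v
    unfolding w_def by (simp add: inner_diff_left)
  have "inner w (fst T $ p 1) = 0" "inner w (fst T $ p 2) = 0" "inner w (fst T $ p 3) = 0"
    unfolding wv using N(1,2,3) u by simp_all
  moreover have "inner w (fst T $ p 4) = 0"
    unfolding wv using N(4) by simp
  ultimately have "\<forall>m. inner w (fst T $ m) = 0" using ef_all[OF p, of "\<lambda>m. inner w (fst T $ m) = 0"] by simp
  then have "w = 0" using tet_ncop[OF T] by blast
  then show ?thesis by (simp add: w_def)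
qed

lemma three_zero:
  fixes h12 h13 h21 h23 h31 h32 x1 x2 x3 :: real
  assumes nz: "h12 \<noteq> 0" "h21 \<noteq> 0"
    and det: "h12 * h23 * h31 + h13 * h21 * h32 \<noteq> 0"
    and e: "x2 * h12 + x3 * h13 = 0" "x1 * h21 + x3 * h23 = 0" "x1 * h31 + x2 * h32 = 0"
  shows "x1 = 0 \<and> x2 = 0 \<and> x3 = 0"
proof -
  have "x3 * (h12 * h23 * h31 + h13 * h21 * h32) =
        (h12 * h31) * (x1 * h21 + x3 * h23) + (h21 * h32) * (x2 * h12 + x3 * h13)
        - (h12 * h21) * (x1 * h31 + x2 * h32)"
    by (simp add: algebra_simps)
  also have "\<dots> = 0" using e by simp
  finally have x3: "x3 = 0" using det by simp
  then have "x2 = 0" "x1 = 0" using e nz by auto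
  then show ?thesis using x3 by simp
qed

lemma tet_det:
  assumes T: "tetrahedron_of_flags T" and d: "a \<noteq> b" "b \<noteq> c" "a \<noteq> c"
  shows "inner (snd T $ a) (fst T $ b) * inner (snd T $ b) (fst T $ c) * inner (snd T $ c) (fst T $ a)
       + inner (snd T $ a) (fst T $ c) * inner (snd T $ b) (fst T $ a) * inner (snd T $ c) (fst T $ b) \<noteq> 0"
proof -
  define h where "h i j = inner (snd T $ i) (fst T $ j)" for i j
  obtain s where s1: "\<forall>m. s m = 1 \<or> s m = -1"
    and s2: "\<And>k t. (\<forall>m. t m > 0) \<Longrightarrow> (\<Sum>m\<in>UNIV. t m * s m * h k m) \<noteq> 0"
    using tet_sign[OF T] unfolding h_def by blast
  have hnz: "h i j \<noteq> 0 \<longleftrightarrow> i \<noteq> j" for i j using tet_nd[OF T] h_def by simp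
  have snz: "s m \<noteq> 0" for m using s1 by (metis one_neq_zero neg_0_equal_iff_equal zero_neq_neg_one)
  have same: "0 < (s m1 * h k m1) * (s m2 * h k m2)" if m: "m1 \<noteq> k" "m2 \<noteq> k" for k m1 m2
  proof (rule ccontr)
    define c where "c m = s m * h k m" for m
    have cnz: "c m \<noteq> 0" if "m \<noteq> k" for m using that hnz snz c_def by simp
    have ck: "c k = 0" using hnz c_def by simp
    assume "\<not> 0 < (s m1 * h k m1) * (s m2 * h k m2)"
    then have np: "\<not> 0 < c m1 * c m2" by (simp add: c_def)
    have mixed: "(c m1 > 0 \<and> c m2 < 0) \<or> (c m1 < 0 \<and> c m2 > 0)"
      using np cnz[OF m(1)] cnz[OF m(2)]
      by (metis linorder_neqE_linordered_idom mult_neg_neg mult_pos_pos)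
    define P where "P = card {m. c m > 0}"
    define Q where "Q = card {m. c m < 0}"
    have P: "P > 0" unfolding P_def using mixed by (auto simp: card_gt_0_iff)
    have Q: "Q > 0" unfolding Q_def using mixed by (auto simp: card_gt_0_iff)
    define t where "t m = (if m = k then 1 else (if c m > 0 then real Q else real P) / \<bar>c m\<bar>)" for m
    have tpos: "\<forall>m. t m > 0"
    proof
      fix m show "t m > 0"
        using cnz[of m] P Q by (auto simp: t_def)
    qed
    have tm: "t m * s m * h k m = (if c m > 0 then real Q else 0) - (if c m < 0 then real P else 0)" for m
    proof (cases "m = k")
      case True then show ?thesis using hnz[of k k] by (simp add: c_def t_def)
    next
      case False
      then have "c m \<noteq> 0" by (rule cnz)
      then show ?thesis using False
        by (auto simp: t_def c_def[symmetric] mult.assoc abs_if divide_simps)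
    qed
    have "(\<Sum>m\<in>UNIV. t m * s m * h k m) =
          (\<Sum>m\<in>UNIV. (if c m > 0 then real Q else 0)) - (\<Sum>m\<in>UNIV. (if c m < 0 then real P else 0))"
      unfolding tm by (simp add: sum_subtractf)
    also have "\<dots> = real Q * real P - real P * real Q"
      by (simp add: sum.inter_filter[symmetric] P_def Q_def)
    also have "\<dots> = 0" by simp
    finally show False using s2[OF tpos] by blast
  qed
  have ss: "s m * s m = 1" for m using s1 by (metis mult_1 mult_minus1 minus_minus)
  have E: "(s b * h a b * (s c * h a c)) * ((s a * h b a) * (s c * h b c)) * ((s a * h c a) * (s b * h c b))
     = (h a b * h b c * h c a) * (h a c * h b a * h c b) * (s a * s a) * (s b * s b) * (s c * s c)"
    by (simp add: ac_simps)
  then have E2: "(s b * h a b * (s c * h a c)) * ((s a * h b a) * (s c * h b c)) * ((s a * h c a) * (s b * h c b))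
     = (h a b * h b c * h c a) * (h a c * h b a * h c b)" by (simp only: ss mult_1_right)
  have G: "0 < (s b * h a b * (s c * h a c)) * ((s a * h b a) * (s c * h b c)) * ((s a * h c a) * (s b * h c b))"
    using same[of b a c] same[of a b c] same[of a c b] d by (metis mult_pos_pos)
  have pos: "0 < (h a b * h b c * h c a) * (h a c * h b a * h c b)" using G E2 by linarith
  have "h a b * h b c * h c a + h a c * h b a * h c b \<noteq> 0"
  proof
    assume "h a b * h b c * h c a + h a c * h b a * h c b = 0"
    then have "h a c * h b a * h c b = - (h a b * h b c * h c a)" by linarith
    then show False using pos by (simp add: mult_less_0_iff)
  qed
  then show ?thesis by (simp add: h_def)
qed

lemma tet_dual_span:
  assumes T: "tetrahedron_of_flags T" and p: "edge_face p" and N: "N \<noteq> 0"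
    "inner N (fst T $ p 1) = 0" "inner N (fst T $ p 2) = 0" "inner N (fst T $ p 3) = 0"
    and u: "inner N u = 0" "inner (snd T $ p 1) u = 0" "inner (snd T $ p 2) u = 0" "inner (snd T $ p 3) u = 0"
  shows "u = 0"
proof -
  obtain c where "u = (\<Sum>m\<in>UNIV. c m *\<^sub>R fst T $ m)" using tet_span[OF T] by blast
  then have u4: "u = c (p 1) *\<^sub>R fst T $ p 1 + c (p 2) *\<^sub>R fst T $ p 2 + c (p 3) *\<^sub>R fst T $ p 3
     + c (p 4) *\<^sub>R fst T $ p 4" using sum_perm4[OF p] by simp
  have n4: "inner N (fst T $ p 4) \<noteq> 0" by (rule normal_nz4[OF T p N])
  have "inner N u = c (p 4) * inner N (fst T $ p 4)" using N u4 by (simp add: inner_add_right)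
  then have c4: "c (p 4) = 0" using u(1) n4 by simp
  note dd = ef_distinct[OF p]
  have hz: "inner (snd T $ i) (fst T $ i) = 0" for i using tet_nd[OF T] by simp
  have hnz: "i \<noteq> j \<Longrightarrow> inner (snd T $ i) (fst T $ j) \<noteq> 0" for i j using tet_nd[OF T] by simp
  have e1: "c (p 2) * inner (snd T $ p 1) (fst T $ p 2) + c (p 3) * inner (snd T $ p 1) (fst T $ p 3) = 0"
    using u(2) u4 c4 hz by (simp add: inner_add_right)
  have e2: "c (p 1) * inner (snd T $ p 2) (fst T $ p 1) + c (p 3) * inner (snd T $ p 2) (fst T $ p 3) = 0"
    using u(3) u4 c4 hz by (simp add: inner_add_right)
  have e3: "c (p 1) * inner (snd T $ p 3) (fst T $ p 1) + c (p 2) * inner (snd T $ p 3) (fst T $ p 2) = 0"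
    using u(4) u4 c4 hz by (simp add: inner_add_right)
  have "c (p 1) = 0 \<and> c (p 2) = 0 \<and> c (p 3) = 0"
    by (rule three_zero[OF hnz[OF dd(1)] hnz[OF dd(7)] tet_det[OF T dd(1) dd(4) dd(2)] e1 e2 e3])
  then show ?thesis using u4 c4 by simp
qed



subsection \<open>Quotient topology\<close>

lemma quotient_top_istop:
  assumes eq: "equiv (topspace X) r"
  shows "istopology (\<lambda>U. U \<subseteq> topspace X // r \<and> openin X (\<Union>U))"
proof -
  have int: "S \<inter> T \<subseteq> topspace X // r \<and> openin X (\<Union>(S \<inter> T))"
    if S: "S \<subseteq> topspace X // r \<and> openin X (\<Union>S)" and T: "T \<subseteq> topspace X // r \<and> openin X (\<Union>T)" for S T
  proof -
    have "\<Union>(S \<inter> T) = \<Union>S \<inter> \<Union>T"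
    proof
      show "\<Union>(S \<inter> T) \<subseteq> \<Union>S \<inter> \<Union>T" by blast
      show "\<Union>S \<inter> \<Union>T \<subseteq> \<Union>(S \<inter> T)"
      proof
        fix x assume "x \<in> \<Union>S \<inter> \<Union>T"
        then obtain c d where cd: "c \<in> S" "d \<in> T" "x \<in> c" "x \<in> d" by blast
        then have "c = d" using quotient_disj[OF eq, of c d] S T by blast
        then show "x \<in> \<Union>(S \<inter> T)" using cd by blast
      qed
    qed
    then show ?thesis using S T by auto
  qed
  have un: "\<Union>K \<subseteq> topspace X // r \<and> openin X (\<Union>(\<Union>K))"
    if K: "\<forall>U\<in>K. U \<subseteq> topspace X // r \<and> openin X (\<Union>U)" for K
  proof -
    have e: "\<Union>(\<Union>K) = \<Union>((\<lambda>U. \<Union>U) ` K)" by blast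
    have "openin X (\<Union>((\<lambda>U. \<Union>U) ` K))" by (rule openin_Union) (use K in auto)
    then show ?thesis using K unfolding e by blast
  qed
  show ?thesis unfolding istopology_def using int un by simp
qed

lemma quotient_top_open:
  assumes eq: "equiv (topspace X) r"
  shows "openin (quotient_top X r) U \<longleftrightarrow> U \<subseteq> topspace X // r \<and> openin X (\<Union>U)"
  unfolding quotient_top_def using topology_inverse'[OF quotient_top_istop[OF eq]] by simp

lemma quotient_top_space:
  assumes eq: "equiv (topspace X) r"
  shows "topspace (quotient_top X r) = topspace X // r"
proof -
  have "\<Union>(topspace X // r) = topspace X" by (rule Union_quotient[OF eq])
  then have "openin (quotient_top X r) (topspace X // r)"
    unfolding quotient_top_open[OF eq] by simp
  then show ?thesis unfolding topspace_def quotient_top_open[OF eq] by blast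
qed

lemma FL_rep_iff: "x \<in> FL_rep p q \<longleftrightarrow> tetrahedron_of_flags (fst x) \<and> tetrahedron_of_flags (snd x) \<and> glued p q (fst x) (snd x)"
  by (cases x) (simp add: FL_rep_def)

lemma FL_rel_iff: "(x, y) \<in> FL_rel p q \<longleftrightarrow> x \<in> FL_rep p q \<and> y \<in> FL_rep p q \<and> pgl_equiv2 x y"
  by (simp add: FL_rel_def)

lemma FL_equiv: "equiv (FL_rep p q) (FL_rel p q)"
proof (rule equivI)
  show "refl_on (FL_rep p q) (FL_rel p q)"
    by (rule refl_onI) (auto simp: FL_rel_def pgl_equiv2_refl)
  show "sym (FL_rel p q)"
    by (rule symI) (auto simp: FL_rel_def pgl_equiv2_sym)
  show "trans (FL_rel p q)"
    by (rule transI) (auto simp: FL_rel_def intro: pgl_equiv2_trans)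
  show "FL_rel p q \<subseteq> FL_rep p q \<times> FL_rep p q" by (auto simp: FL_rel_def)
qed

lemma FL_top_space: "topspace (subtopology euclidean (FL_rep p q)) = FL_rep p q"
  by simp

lemma FL_equiv': "equiv (topspace (subtopology euclidean (FL_rep p q))) (FL_rel p q)"
  using FL_equiv by simp

lemma FLq_space: "topspace (FLq p q) = FL_rep p q // FL_rel p q"
  unfolding FLq_def quotient_top_space[OF FL_equiv'] by simp

lemma FLq_open: "openin (FLq p q) U \<longleftrightarrow> U \<subseteq> FL_rep p q // FL_rel p q \<and>
    openin (subtopology euclidean (FL_rep p q)) (\<Union>U)"
  unfolding FLq_def quotient_top_open[OF FL_equiv'] by simp

lemma class_of:
  assumes "c \<in> FL_rep p q // FL_rel p q" "x \<in> c"
  shows "c = FL_rel p q `` {x}" "x \<in> FL_rep p q"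
proof -
  obtain y where y: "y \<in> FL_rep p q" "c = FL_rel p q `` {y}" using assms(1) by (rule quotientE)
  then have "(y, x) \<in> FL_rel p q" using assms(2) by simp
  then show "c = FL_rel p q `` {x}" using y equiv_class_eq[OF FL_equiv] by simp
  show "x \<in> FL_rep p q" using \<open>(y, x) \<in> FL_rel p q\<close> by (simp add: FL_rel_def)
qed

lemma class_self: "x \<in> FL_rep p q \<Longrightarrow> x \<in> FL_rel p q `` {x}"
  using equiv_class_self[OF FL_equiv] by simp

lemma class_in: "x \<in> FL_rep p q \<Longrightarrow> FL_rel p q `` {x} \<in> FL_rep p q // FL_rel p q"
  by (rule quotientI)

lemma class_eq: "x \<in> FL_rep p q \<Longrightarrow> y \<in> FL_rep p q \<Longrightarrow> pgl_equiv2 x y \<Longrightarrow>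
   FL_rel p q `` {x} = FL_rel p q `` {y}"
  using equiv_class_eq[OF FL_equiv] by (simp add: FL_rel_def)

subsection \<open>The gluing formula\<close>

definition gform :: "(4 \<Rightarrow> 4) \<Rightarrow> tet \<Rightarrow> real^4 \<Rightarrow> real" where
  "gform p F U = (let V = fst F; H = snd F; i = p 1; j = p 2; k = p 3; l = p 4;
          N = plane_cov (V $ i) (V $ j) (V $ k)
      in - ((H $ i \<bullet> V $ l) * (H $ j \<bullet> V $ k) * (N \<bullet> U)) /
           ((H $ i \<bullet> V $ k) * (H $ j \<bullet> U) * (N \<bullet> V $ l)))"

lemma gpar_gform: "gpar p q x = gform p (fst x) (fst (snd x) $ q 4)"
  by (simp add: gpar_def gform_def Let_def)

lemma gcancel:
  fixes bi al bj ak c r x1 x2 x3 y1 y2 y3 :: real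
  assumes "bi \<noteq> 0" "al \<noteq> 0" "bj \<noteq> 0" "ak \<noteq> 0" "c \<noteq> 0" "r \<noteq> 0"
  shows "- ((bi * al * x1) * (bj * ak * x2) * (c * r * x3)) / ((bi * ak * y1) * (bj * c * y2) * (al * r * y3))
       = - (x1 * x2 * x3) / (y1 * y2 * y3)"
proof -
  define K where "K = bi * al * bj * ak * c * r"
  have K: "K \<noteq> 0" using assms by (simp add: K_def)
  have "- ((bi * al * x1) * (bj * ak * x2) * (c * r * x3)) / ((bi * ak * y1) * (bj * c * y2) * (al * r * y3))
     = (K * (- (x1 * x2 * x3))) / (K * (y1 * y2 * y3))"
    by (simp add: K_def ac_simps)
  also have "\<dots> = - (x1 * x2 * x3) / (y1 * y2 * y3)" using K by simp
  finally show ?thesis .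
qed

lemma normal_props:
  assumes T: "tetrahedron_of_flags F" and p: "edge_face p"
  defines "N \<equiv> plane_cov (fst F $ p 1) (fst F $ p 2) (fst F $ p 3)"
  shows "N \<noteq> 0" "inner N (fst F $ p 1) = 0" "inner N (fst F $ p 2) = 0" "inner N (fst F $ p 3) = 0"
    "inner N (fst F $ p 4) \<noteq> 0"
  using plane_cov normal_nz4[OF T p] unfolding N_def by blast+

lemma inner_act: "invertible (A::real^4^4) \<Longrightarrow>
   inner (b *\<^sub>R (h v* matrix_inv A)) (a *\<^sub>R (A *v v)) = b * a * inner h v"
  using inner_vm_mv by simp

lemma gform_transfer:
  assumes T: "tetrahedron_of_flags F" and p: "edge_face p" and A: "invertible A"
    and R: "same_flags F' (pgl_act A F)" and c: "c \<noteq> 0"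
  shows "gform p F' (c *\<^sub>R (A *v U)) = gform p F U"
proof -
  obtain a b where ab: "\<And>m. a m \<noteq> 0" "\<And>m. b m \<noteq> 0"
    "\<And>m. fst F' $ m = a m *\<^sub>R (A *v fst F $ m)"
    "\<And>m. snd F' $ m = b m *\<^sub>R (snd F $ m v* matrix_inv A)"
    using act_coeffs[OF R] by blast
  define N where "N = plane_cov (fst F $ p 1) (fst F $ p 2) (fst F $ p 3)"
  define N' where "N' = plane_cov (fst F' $ p 1) (fst F' $ p 2) (fst F' $ p 3)"
  have NP: "N \<noteq> 0" "inner N (fst F $ p 1) = 0" "inner N (fst F $ p 2) = 0" "inner N (fst F $ p 3) = 0"
    "inner N (fst F $ p 4) \<noteq> 0" using normal_props[OF T p] unfolding N_def by blast+
  have NP': "N' \<noteq> 0" "inner N' (fst F' $ p 1) = 0" "inner N' (fst F' $ p 2) = 0" "inner N' (fst F' $ p 3) = 0"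
    using plane_cov unfolding N'_def by blast+
  have o: "inner (N' v* A) (fst F $ p n) = 0" if "n = 1 \<or> n = 2 \<or> n = 3" for n
  proof -
    have "inner N' (fst F' $ p n) = 0" using NP' that by auto
    then have "a (p n) * inner N' (A *v fst F $ p n) = 0" using ab(3) by simp
    then show ?thesis using ab(1) by (simp add: dot_lmul_matrix)
  qed
  define r where "r = inner (N' v* A) (fst F $ p 4) / inner N (fst F $ p 4)"
  have Nr: "N' v* A = r *\<^sub>R N"
    unfolding r_def by (rule prop_normal[OF T p NP(2,3,4,5)]) (use o in auto)
  have r: "r \<noteq> 0"
  proof
    assume "r = 0"
    then have "N' v* A = 0" using Nr by simp
    then show False using NP'(1) vm_zero_iff[OF A] by simp
  qed
  have NA: "inner N' (A *v u) = r * inner N u" for u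
    by (simp add: dot_lmul_matrix[symmetric] Nr)
  have HA: "inner (snd F' $ m) (A *v u) = b m * inner (snd F $ m) u" for m u
    using ab(4) inner_vm_mv[OF A] by simp
  have e1: "inner (snd F' $ p 1) (fst F' $ p 4) = b (p 1) * a (p 4) * inner (snd F $ p 1) (fst F $ p 4)"
    using ab(3,4) inner_act[OF A] by simp
  have e2: "inner (snd F' $ p 2) (fst F' $ p 3) = b (p 2) * a (p 3) * inner (snd F $ p 2) (fst F $ p 3)"
    using ab(3,4) inner_act[OF A] by simp
  have e3: "inner N' (c *\<^sub>R (A *v U)) = c * r * inner N U" using NA by simp
  have e4: "inner (snd F' $ p 1) (fst F' $ p 3) = b (p 1) * a (p 3) * inner (snd F $ p 1) (fst F $ p 3)"
    using ab(3,4) inner_act[OF A] by simp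
  have e5: "inner (snd F' $ p 2) (c *\<^sub>R (A *v U)) = b (p 2) * c * inner (snd F $ p 2) U"
    using HA by simp
  have e6: "inner N' (fst F' $ p 4) = a (p 4) * r * inner N (fst F $ p 4)"
    using NA ab(3) by simp
  have "gform p F' (c *\<^sub>R (A *v U)) =
     - ((b (p 1) * a (p 4) * inner (snd F $ p 1) (fst F $ p 4)) *
        (b (p 2) * a (p 3) * inner (snd F $ p 2) (fst F $ p 3)) * (c * r * inner N U)) /
       ((b (p 1) * a (p 3) * inner (snd F $ p 1) (fst F $ p 3)) *
        (b (p 2) * c * inner (snd F $ p 2) U) * (a (p 4) * r * inner N (fst F $ p 4)))"
    unfolding gform_def Let_def N'_def[symmetric] e1 e2 e3 e4 e5 e6 ..
  also have "\<dots> = gform p F U"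
    unfolding gcancel[OF ab(2) ab(1) ab(2) ab(1) c r] gform_def Let_def N_def ..
  finally show ?thesis .
qed

lemma gpar_inv:
  assumes p: "edge_face p" and x: "x \<in> FL_rep p q" and y: "y \<in> FL_rep p q" and e: "pgl_equiv2 x y"
  shows "gpar p q y = gpar p q x"
proof -
  obtain A where A: "invertible A" "same_flags (fst y) (pgl_act A (fst x))"
    "same_flags (snd y) (pgl_act A (snd x))" using e unfolding pgl_equiv2_def by blast
  obtain c d where cd: "\<And>m. c m \<noteq> 0" "\<And>m. d m \<noteq> 0"
    "\<And>m. fst (snd y) $ m = c m *\<^sub>R (A *v fst (snd x) $ m)"
    "\<And>m. snd (snd y) $ m = d m *\<^sub>R (snd (snd x) $ m v* matrix_inv A)"
    using act_coeffs[OF A(3)] by blast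
  have T: "tetrahedron_of_flags (fst x)" using x FL_rep_iff by blast
  show ?thesis unfolding gpar_gform cd(3) by (rule gform_transfer[OF T p A(1,2) cd(1)])
qed

lemma glued_parts:
  assumes "glued p q F E"
  shows "proj_eq (fst F $ p 1) (fst E $ q 2)" "proj_eq (snd F $ p 1) (snd E $ q 2)"
     "proj_eq (fst F $ p 2) (fst E $ q 1)" "proj_eq (snd F $ p 2) (snd E $ q 1)"
     "proj_eq (fst F $ p 3) (fst E $ q 3)" "proj_eq (snd F $ p 3) (snd E $ q 3)"
  using assms unfolding glued_def by blast+

lemma gform_nz_parts:
  assumes p: "edge_face p" and q: "edge_face q" and x: "x \<in> FL_rep p q"
  defines "N \<equiv> plane_cov (fst (fst x) $ p 1) (fst (fst x) $ p 2) (fst (fst x) $ p 3)"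
  shows "inner N (fst (snd x) $ q 4) \<noteq> 0" "inner (snd (fst x) $ p 2) (fst (snd x) $ q 4) \<noteq> 0"
proof -
  have T: "tetrahedron_of_flags (fst x)" and TE: "tetrahedron_of_flags (snd x)"
    and g: "glued p q (fst x) (snd x)" using x FL_rep_iff by blast+
  have NP: "N \<noteq> 0" "inner N (fst (fst x) $ p 1) = 0" "inner N (fst (fst x) $ p 2) = 0"
    "inner N (fst (fst x) $ p 3) = 0" using normal_props[OF T p] unfolding N_def by blast+
  note gp = glued_parts[OF g]
  have "inner N (fst (snd x) $ q 1) = 0" "inner N (fst (snd x) $ q 2) = 0" "inner N (fst (snd x) $ q 3) = 0"
    using NP gp proj_eq_inner2 by blast+
  then show "inner N (fst (snd x) $ q 4) \<noteq> 0" using normal_nz4[OF TE q NP(1)] by blast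
  have "inner (snd (snd x) $ q 1) (fst (snd x) $ q 4) \<noteq> 0"
    using tet_nd[OF TE] ef_distinct(3)[OF q] by simp
  then show "inner (snd (fst x) $ p 2) (fst (snd x) $ q 4) \<noteq> 0"
    using gp(4) proj_eq_inner1 by blast
qed

lemma gpar_nz:
  assumes p: "edge_face p" and q: "edge_face q" and x: "x \<in> FL_rep p q"
  shows "gpar p q x \<noteq> 0"
proof -
  have T: "tetrahedron_of_flags (fst x)" using x FL_rep_iff by blast
  note d = ef_distinct[OF p]
  have h: "inner (snd (fst x) $ i) (fst (fst x) $ j) \<noteq> 0" if "i \<noteq> j" for i j
    using tet_nd[OF T] that by simp
  show ?thesis
    using gform_nz_parts[OF p q x] normal_props(5)[OF T p] h[OF d(3)] h[OF d(4)] h[OF d(2)]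
    unfolding gpar_gform gform_def Let_def by simp
qed

lemma gp_class:
  assumes p: "edge_face p" and x: "x \<in> FL_rep p q"
  shows "gluing_param p q (FL_rel p q `` {x}) = gpar p q x"
proof -
  have "gpar p q ` (FL_rel p q `` {x}) = {gpar p q x}"
  proof
    show "gpar p q ` (FL_rel p q `` {x}) \<subseteq> {gpar p q x}"
      using gpar_inv[OF p x] by (auto simp: FL_rel_def)
    show "{gpar p q x} \<subseteq> gpar p q ` (FL_rel p q `` {x})"
      using class_self[OF x] by blast
  qed
  then show ?thesis unfolding gluing_param_def by simp
qed



lemma smat_mv: "((k::real) *\<^sub>R (mat 1::real^4^4)) *v u = k *\<^sub>R u"
  by (simp add: vec_eq_iff matrix_vector_mult_def mat_def if_distrib if_distribR cong: if_cong)

lemma smat_vm: "(u::real^4) v* ((k::real) *\<^sub>R (mat 1::real^4^4)) = k *\<^sub>R u"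
  by (simp add: vec_eq_iff vector_matrix_mult_def mat_def if_distrib if_distribR cong: if_cong)

lemma pe_pt:
  assumes A: "invertible (A::real^4^4)"
    and g1: "proj_eq v w" and g2: "proj_eq v' w'"
    and v': "v' = a *\<^sub>R (A *v v)" and w': "w' = c *\<^sub>R (B *v w)" and a: "a \<noteq> 0" and c: "c \<noteq> 0"
  shows "proj_eq ((matrix_inv A ** B) *v v) v"
proof -
  have "proj_eq (A *v v) v'" using v' a proj_eq_scale proj_eq_sym by metis
  moreover have "proj_eq w' (B *v w)" using w' c proj_eq_scale by metis
  moreover have "proj_eq (B *v w) (B *v v)" using g1 proj_eq_mv proj_eq_sym by metis
  ultimately have "proj_eq (A *v v) (B *v v)" using g2 proj_eq_trans by metis
  then have "proj_eq (matrix_inv A *v (A *v v)) (matrix_inv A *v (B *v v))" by (rule proj_eq_mv)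
  then have "proj_eq v ((matrix_inv A ** B) *v v)" by (simp add: matrix_vector_mul_assoc minv[OF A])
  then show ?thesis by (rule proj_eq_sym)
qed

lemma pe_pl:
  assumes A: "invertible (A::real^4^4)" and B: "invertible B"
    and g1: "proj_eq h z" and g2: "proj_eq h' z'"
    and h': "h' = b *\<^sub>R (h v* matrix_inv A)" and z': "z' = d *\<^sub>R (z v* matrix_inv B)" and b: "b \<noteq> 0" and d: "d \<noteq> 0"
  shows "proj_eq (h v* (matrix_inv A ** B)) h"
proof -
  have "proj_eq (h v* matrix_inv A) h'" using h' b proj_eq_scale proj_eq_sym by metis
  moreover have "proj_eq z' (z v* matrix_inv B)" using z' d proj_eq_scale by metis
  moreover have "proj_eq (z v* matrix_inv B) (h v* matrix_inv B)" using g1 proj_eq_vm proj_eq_sym by metis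
  ultimately have "proj_eq (h v* matrix_inv A) (h v* matrix_inv B)" using g2 proj_eq_trans by metis
  then have "proj_eq ((h v* matrix_inv A) v* B) ((h v* matrix_inv B) v* B)" by (rule proj_eq_vm)
  then show ?thesis by (simp add: minv[OF B] vector_matrix_mul_assoc)
qed

lemma pe_fix: "proj_eq u v \<Longrightarrow> \<exists>l. l \<noteq> 0 \<and> u = l *\<^sub>R v"
  unfolding proj_eq_def by blast

lemma inj_main:
  assumes p: "edge_face p" and q: "edge_face q" and x: "x \<in> FL_rep p q" and y: "y \<in> FL_rep p q"
    and ef: "pgl_equiv (fst x) (fst y)" and ee: "pgl_equiv (snd x) (snd y)"
    and g: "gpar p q x = gpar p q y"
  shows "pgl_equiv2 x y"
proof -
  obtain V H W Z where xd: "x = ((V, H), (W, Z))" by (metis prod.collapse)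
  obtain V' H' W' Z' where yd: "y = ((V', H'), (W', Z'))" by (metis prod.collapse)
  have T: "tetrahedron_of_flags (V, H)" and TE: "tetrahedron_of_flags (W, Z)"
    and gx: "glued p q (V, H) (W, Z)" using x FL_rep_iff xd by auto
  have gy: "glued p q (V', H') (W', Z')" using y FL_rep_iff yd by auto
  obtain A where A: "invertible A" "same_flags (V', H') (pgl_act A (V, H))"
    using ef xd yd unfolding pgl_equiv_def by auto
  obtain B where B: "invertible B" "same_flags (W', Z') (pgl_act B (W, Z))"
    using ee xd yd unfolding pgl_equiv_def by auto
  obtain a b where ab: "\<And>m. a m \<noteq> 0" "\<And>m. b m \<noteq> 0"
    "\<And>m. V' $ m = a m *\<^sub>R (A *v V $ m)" "\<And>m. H' $ m = b m *\<^sub>R (H $ m v* matrix_inv A)"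
    using act_coeffs[OF A(2)] by auto
  obtain c d where cd: "\<And>m. c m \<noteq> 0" "\<And>m. d m \<noteq> 0"
    "\<And>m. W' $ m = c m *\<^sub>R (B *v W $ m)" "\<And>m. Z' $ m = d m *\<^sub>R (Z $ m v* matrix_inv B)"
    using act_coeffs[OF B(2)] by auto
  define C where "C = matrix_inv A ** B"
  have AC: "A ** C = B" unfolding C_def using minv[OF A(1)] by (simp add: matrix_mul_assoc)
  have Cinv: "invertible C" unfolding C_def by (rule invertible_mult[OF invertible_minv[OF A(1)] B(1)])
  note gxp = glued_parts[OF gx, simplified]
  note gyp = glued_parts[OF gy, simplified]
  have pt: "proj_eq (C *v V $ p n) (V $ p n)" if "n = 1 \<or> n = 2 \<or> n = 3" for n
  proof -
    have "\<exists>n'. proj_eq (V $ p n) (W $ q n') \<and> proj_eq (V' $ p n) (W' $ q n')"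
      using that gxp gyp by auto
    then obtain n' where "proj_eq (V $ p n) (W $ q n')" "proj_eq (V' $ p n) (W' $ q n')" by blast
    then show ?thesis unfolding C_def by (rule pe_pt[OF A(1) _ _ ab(3) cd(3) ab(1) cd(1)])
  qed
  have pl: "proj_eq (H $ p n v* C) (H $ p n)" if "n = 1 \<or> n = 2 \<or> n = 3" for n
  proof -
    have "\<exists>n'. proj_eq (H $ p n) (Z $ q n') \<and> proj_eq (H' $ p n) (Z' $ q n')"
      using that gxp gyp by auto
    then obtain n' where "proj_eq (H $ p n) (Z $ q n')" "proj_eq (H' $ p n) (Z' $ q n')" by blast
    then show ?thesis unfolding C_def by (rule pe_pl[OF A(1) B(1) _ _ ab(4) cd(4) ab(2) cd(2)])
  qed
  obtain l1 where l1: "l1 \<noteq> 0" "C *v V $ p 1 = l1 *\<^sub>R V $ p 1" using pe_fix[OF pt] by auto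
  obtain l2 where l2: "l2 \<noteq> 0" "C *v V $ p 2 = l2 *\<^sub>R V $ p 2" using pe_fix[OF pt] by auto
  obtain l3 where l3: "l3 \<noteq> 0" "C *v V $ p 3 = l3 *\<^sub>R V $ p 3" using pe_fix[OF pt] by auto
  obtain n1 where n1: "n1 \<noteq> 0" "H $ p 1 v* C = n1 *\<^sub>R H $ p 1" using pe_fix[OF pl] by auto
  obtain n2 where n2: "n2 \<noteq> 0" "H $ p 2 v* C = n2 *\<^sub>R H $ p 2" using pe_fix[OF pl] by auto
  obtain n3 where n3: "n3 \<noteq> 0" "H $ p 3 v* C = n3 *\<^sub>R H $ p 3" using pe_fix[OF pl] by auto
  note dd = ef_distinct[OF p]
  have hnz: "inner (H $ i) (V $ j) \<noteq> 0" if "i \<noteq> j" for i j using tet_nd[OF T] that by simp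
  have rel: "nn * inner (H $ i) (V $ j) = ll * inner (H $ i) (V $ j)"
    if "H $ i v* C = nn *\<^sub>R H $ i" "C *v V $ j = ll *\<^sub>R V $ j" for nn ll i j
  proof -
    have "inner (H $ i v* C) (V $ j) = inner (H $ i) (C *v V $ j)" by (rule dot_lmul_matrix)
    then show ?thesis using that by simp
  qed
  have "n1 = l2" using rel[OF n1(2) l2(2)] hnz[OF dd(1)] by simp
  moreover have "n1 = l3" using rel[OF n1(2) l3(2)] hnz[OF dd(2)] by simp
  moreover have "n2 = l1" using rel[OF n2(2) l1(2)] hnz[OF dd(7)] by simp
  moreover have "n2 = l3" using rel[OF n2(2) l3(2)] hnz[OF dd(4)] by simp
  moreover have "n3 = l1" using rel[OF n3(2) l1(2)] hnz[OF dd(8)] by simp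
  ultimately have eqs: "l2 = l1" "l3 = l1" "n1 = l1" "n2 = l1" "n3 = l1" by auto
  define lam where "lam = l1"
  have lam: "lam \<noteq> 0" using l1 lam_def by simp
  define N where "N = plane_cov (V $ p 1) (V $ p 2) (V $ p 3)"
  have NP: "N \<noteq> 0" "inner N (V $ p 1) = 0" "inner N (V $ p 2) = 0" "inner N (V $ p 3) = 0"
    "inner N (V $ p 4) \<noteq> 0" using normal_props[OF T p] unfolding N_def by auto
  have oC: "inner (N v* C) (V $ p n) = 0" if "n = 1 \<or> n = 2 \<or> n = 3" for n
  proof -
    have "inner (N v* C) (V $ p n) = inner N (C *v V $ p n)" by (rule dot_lmul_matrix)
    then show ?thesis using that l1 l2 l3 NP by auto
  qed
  define rho where "rho = inner (N v* C) (V $ p 4) / inner N (V $ p 4)"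
  have NC: "N v* C = rho *\<^sub>R N"
    unfolding rho_def using prop_normal[of "(V,H)" p N "N v* C"] T p NP oC[of 1] oC[of 2] oC[of 3] by simp
  have HC2: "H $ p 2 v* C = lam *\<^sub>R H $ p 2" using n2 eqs lam_def by simp
  have "gpar p q y = gform p (V', H') (c (q 4) *\<^sub>R (A *v (C *v W $ q 4)))"
    unfolding gpar_gform yd by (simp add: cd(3) matrix_vector_mul_assoc AC)
  also have "\<dots> = gform p (V, H) (C *v W $ q 4)"
    by (rule gform_transfer[OF T p A(1) A(2) cd(1)])
  also have "\<dots> = (rho / lam) * gform p (V, H) (W $ q 4)"
  proof -
    have "inner N (C *v W $ q 4) = rho * inner N (W $ q 4)"
      using dot_lmul_matrix[of N C "W $ q 4"] NC by simp
    moreover have "inner (H $ p 2) (C *v W $ q 4) = lam * inner (H $ p 2) (W $ q 4)"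
      using dot_lmul_matrix[of "H $ p 2" C "W $ q 4"] HC2 by simp
    ultimately show ?thesis unfolding gform_def Let_def using lam
      by (simp add: field_simps N_def)
  qed
  finally have gy': "gpar p q y = (rho / lam) * gpar p q x"
    unfolding gpar_gform xd by simp
  have "gpar p q x \<noteq> 0" by (rule gpar_nz[OF p q x])
  moreover have "gpar p q x = (rho / lam) * gpar p q x" using gy' unfolding g[symmetric] .
  ultimately have "rho / lam = 1" using mult_cancel_right1[of "gpar p q x" "rho/lam"] by blast
  then have rl: "rho = lam" using lam by simp
  have Cu: "C *v u = lam *\<^sub>R u" for u
  proof -
    define w where "w = C *v u - lam *\<^sub>R u"
    have i1: "inner N w = 0"
      using dot_lmul_matrix[of N C u] NC rl by (simp add: w_def inner_diff_right)
    have i2: "inner (H $ p n) w = 0" if "H $ p n v* C = lam *\<^sub>R H $ p n" for n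
      using dot_lmul_matrix[of "H $ p n" C u] that by (simp add: w_def inner_diff_right)
    have "H $ p 1 v* C = lam *\<^sub>R H $ p 1" "H $ p 2 v* C = lam *\<^sub>R H $ p 2" "H $ p 3 v* C = lam *\<^sub>R H $ p 3"
      using n1 n2 n3 eqs lam_def by auto
    then have "w = 0"
      using tet_dual_span[of "(V,H)" p N w] T p NP i1 i2 by simp
    then show ?thesis by (simp add: w_def)
  qed
  have Cmat: "C = lam *\<^sub>R mat 1" unfolding matrix_eq using Cu smat_mv by simp
  have CI: "matrix_inv C = (1 / lam) *\<^sub>R mat 1"
    by (rule minv_unique) (simp_all add: Cmat matrix_scalar_ac lam)
  have BI: "matrix_inv B = matrix_inv C ** matrix_inv A"
    unfolding AC[symmetric] by (rule minv_mult[OF A(1) Cinv])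
  have sfE: "same_flags (W', Z') (pgl_act A (W, Z))"
    unfolding act_iff
  proof (intro allI conjI)
    fix m
    have "B *v W $ m = A *v (C *v W $ m)" by (simp add: AC[symmetric] matrix_vector_mul_assoc)
    then have "B *v W $ m = lam *\<^sub>R (A *v W $ m)" by (simp add: Cu mv_scaleR)
    then have "W' $ m = (c m * lam) *\<^sub>R (A *v W $ m)"
      using cd(3)[of m] by simp
    then show "proj_eq (fst (W', Z') $ m) (A *v fst (W, Z) $ m)"
      using cd(1) lam proj_eq_scale by simp
    have "Z' $ m = (d m / lam) *\<^sub>R (Z $ m v* matrix_inv A)"
      using cd(4)[of m] BI CI by (simp add: vector_matrix_mul_assoc[symmetric] smat_vm vm_scaleR)
    then show "proj_eq (snd (W', Z') $ m) (snd (W, Z) $ m v* matrix_inv A)"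
      using cd(2) lam proj_eq_scale by simp
  qed
  show ?thesis unfolding pgl_equiv2_def xd yd using A sfE by auto
qed



definition hom :: "real^4 \<Rightarrow> real^4 \<Rightarrow> real \<Rightarrow> real^4^4" where
  "hom N P t = mat 1 + t *\<^sub>R (\<chi> i j. P $ i * N $ j)"

lemma outer_mv: "(\<chi> i j. P $ i * N $ j) *v (u::real^4) = inner N u *\<^sub>R P"
  by (simp add: vec_eq_iff matrix_vector_mult_def inner_vec_def sum_distrib_left mult_ac)

lemma outer_vm: "(z::real^4) v* (\<chi> i j. P $ i * N $ j) = inner z P *\<^sub>R N"
  by (simp add: vec_eq_iff vector_matrix_mult_def inner_vec_def sum_distrib_left mult_ac)

lemma smat_vm2: "(z::real^4) v* (t *\<^sub>R (M::real^4^4)) = t *\<^sub>R (z v* M)"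
  by (simp add: vec_eq_iff vector_matrix_mult_def sum_distrib_left mult_ac)

lemma hom_mv: "hom N P t *v u = u + (t * inner N u) *\<^sub>R P"
  unfolding hom_def matrix_vector_mult_add_rdistrib scaleR_matrix_vector_assoc[symmetric] outer_mv
  by simp

lemma hom_vm: "z v* hom N P t = z + (t * inner z P) *\<^sub>R N"
  unfolding hom_def vector_matrix_mult_add_rdistrib smat_vm2 outer_vm
  by simp

lemma hom_mult: "hom N P t ** hom N P s = hom N P (t + s + t * s * inner N P)"
  unfolding matrix_eq
proof
  fix u
  show "(hom N P t ** hom N P s) *v u = hom N P (t + s + t * s * inner N P) *v u"
    unfolding matrix_vector_mul_assoc[symmetric] hom_mv
    by (simp add: inner_add_right algebra_simps)
qed

lemma hom_zero: "hom N P 0 = mat 1"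
  by (simp add: hom_def)

lemma hom_inv:
  assumes d: "d \<noteq> 0" and np: "inner N P \<noteq> 0"
  defines "t \<equiv> (d - 1) / inner N P" and "s \<equiv> (1 / d - 1) / inner N P"
  shows "hom N P t ** hom N P s = mat 1" "hom N P s ** hom N P t = mat 1"
proof -
  have "t + s + t * s * inner N P = 0"
    unfolding t_def s_def using d np by (simp add: field_simps)
  moreover have "s + t + s * t * inner N P = 0"
    unfolding t_def s_def using d np by (simp add: field_simps)
  ultimately show "hom N P t ** hom N P s = mat 1" "hom N P s ** hom N P t = mat 1"
    by (simp_all add: hom_mult hom_zero)
qed

definition cN :: "(4 \<Rightarrow> 4) \<Rightarrow> tet \<Rightarrow> real^4" where
  "cN p F = plane_cov (fst F $ p 1) (fst F $ p 2) (fst F $ p 3)"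

definition cP :: "(4 \<Rightarrow> 4) \<Rightarrow> tet \<Rightarrow> real^4" where
  "cP p F = plane_cov (snd F $ p 1) (snd F $ p 2) (snd F $ p 3)"

definition tt :: "(4 \<Rightarrow> 4) \<Rightarrow> tet \<Rightarrow> real \<Rightarrow> real" where
  "tt p F d = (d - 1) / inner (cN p F) (cP p F)"

definition repd :: "(4 \<Rightarrow> 4) \<Rightarrow> tet \<Rightarrow> tet \<Rightarrow> real \<Rightarrow> tet \<times> tet" where
  "repd p F0 E0 d = (F0, pgl_act (hom (cN p F0) (cP p F0) (tt p F0 d)) E0)"

lemma cNP:
  assumes T: "tetrahedron_of_flags F" and p: "edge_face p"
  shows "cN p F \<noteq> 0" "inner (cN p F) (fst F $ p 1) = 0" "inner (cN p F) (fst F $ p 2) = 0"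
    "inner (cN p F) (fst F $ p 3) = 0" "inner (cN p F) (fst F $ p 4) \<noteq> 0"
    "cP p F \<noteq> 0" "inner (snd F $ p 1) (cP p F) = 0" "inner (snd F $ p 2) (cP p F) = 0"
    "inner (snd F $ p 3) (cP p F) = 0" "inner (cN p F) (cP p F) \<noteq> 0"
proof -
  show N: "cN p F \<noteq> 0" "inner (cN p F) (fst F $ p 1) = 0" "inner (cN p F) (fst F $ p 2) = 0"
    "inner (cN p F) (fst F $ p 3) = 0" "inner (cN p F) (fst F $ p 4) \<noteq> 0"
    using normal_props[OF T p] unfolding cN_def by blast+
  show P: "cP p F \<noteq> 0" "inner (snd F $ p 1) (cP p F) = 0" "inner (snd F $ p 2) (cP p F) = 0"
    "inner (snd F $ p 3) (cP p F) = 0"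
    using plane_cov[of "snd F $ p 1" "snd F $ p 2" "snd F $ p 3"] unfolding cP_def
    by (simp_all add: inner_commute)
  show "inner (cN p F) (cP p F) \<noteq> 0"
  proof
    assume "inner (cN p F) (cP p F) = 0"
    then have "cP p F = 0" by (rule tet_dual_span[OF T p N(1-4) _ P(2-4)])
    then show False using P(1) by simp
  qed
qed

context
  fixes p q :: "4 \<Rightarrow> 4" and F0 E0 :: tet
  assumes p: "edge_face p" and q: "edge_face q" and x0: "(F0, E0) \<in> FL_rep p q"
begin

lemma T0: "tetrahedron_of_flags F0" and TE0: "tetrahedron_of_flags E0" and g0: "glued p q F0 E0"
  using x0 FL_rep_iff by auto

lemma hom_props:
  assumes d: "d \<noteq> 0"
  shows "invertible (hom (cN p F0) (cP p F0) (tt p F0 d))"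
    "matrix_inv (hom (cN p F0) (cP p F0) (tt p F0 d)) = hom (cN p F0) (cP p F0) (tt p F0 (1/d))"
proof -
  note h = hom_inv[OF d cNP(10)[OF T0 p]]
  show "invertible (hom (cN p F0) (cP p F0) (tt p F0 d))"
    unfolding invertible_def tt_def using h by blast
  show "matrix_inv (hom (cN p F0) (cP p F0) (tt p F0 d)) = hom (cN p F0) (cP p F0) (tt p F0 (1/d))"
    unfolding tt_def by (rule minv_unique) (use h in auto)
qed

lemma repd_fixes:
  assumes d: "d \<noteq> 0" and n: "n = 1 \<or> n = 2 \<or> n = 3"
  shows "fst (snd (repd p F0 E0 d)) $ q n = fst E0 $ q n"
        "snd (snd (repd p F0 E0 d)) $ q n = snd E0 $ q n"
proof -
  note gp = glued_parts[OF g0]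
  note NP = cNP[OF T0 p]
  have "\<exists>m. proj_eq (fst F0 $ p m) (fst E0 $ q n) \<and> proj_eq (snd F0 $ p m) (snd E0 $ q n) \<and>
       (m = 1 \<or> m = 2 \<or> m = 3)"
    using n gp by auto
  then obtain m where m: "proj_eq (fst F0 $ p m) (fst E0 $ q n)" "proj_eq (snd F0 $ p m) (snd E0 $ q n)"
    "m = 1 \<or> m = 2 \<or> m = 3" by blast
  have "inner (cN p F0) (fst F0 $ p m) = 0" using m(3) NP by auto
  then have w0: "inner (cN p F0) (fst E0 $ q n) = 0" using m(1) proj_eq_inner2 by blast
  have "inner (snd F0 $ p m) (cP p F0) = 0" using m(3) NP by auto
  then have z0: "inner (snd E0 $ q n) (cP p F0) = 0" using m(2) proj_eq_inner1 by blast
  show "fst (snd (repd p F0 E0 d)) $ q n = fst E0 $ q n"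
    by (simp add: repd_def pgl_act_def hom_mv w0)
  show "snd (snd (repd p F0 E0 d)) $ q n = snd E0 $ q n"
    by (simp add: repd_def pgl_act_def hom_props[OF d] hom_vm z0)
qed

lemma repd_FL:
  assumes d: "d \<noteq> 0"
  shows "repd p F0 E0 d \<in> FL_rep p q"
proof -
  have TE: "tetrahedron_of_flags (snd (repd p F0 E0 d))"
    unfolding repd_def snd_conv by (rule tet_act[OF TE0 hom_props(1)[OF d] same_flags_refl])
  have "glued p q F0 (snd (repd p F0 E0 d))"
    using g0 repd_fixes[OF d] unfolding glued_def by simp
  then show ?thesis using TE T0 unfolding FL_rep_iff by (simp add: repd_def)
qed

lemma repd_equiv:
  assumes d: "d \<noteq> 0"
  shows "pgl_equiv E0 (snd (repd p F0 E0 d))" "fst (repd p F0 E0 d) = F0"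
proof -
  show "pgl_equiv E0 (snd (repd p F0 E0 d))"
    unfolding pgl_equiv_def repd_def snd_conv using hom_props(1)[OF d] same_flags_refl by blast
  show "fst (repd p F0 E0 d) = F0" by (simp add: repd_def)
qed

lemma repd_gpar:
  assumes d: "d \<noteq> 0"
  shows "gpar p q (repd p F0 E0 d) = d * gpar p q (F0, E0)"
proof -
  note NP = cNP[OF T0 p]
  define W where "W = fst E0 $ q 4"
  define t where "t = tt p F0 d"
  have W': "fst (snd (repd p F0 E0 d)) $ q 4 = W + (t * inner (cN p F0) W) *\<^sub>R cP p F0"
    by (simp add: repd_def pgl_act_def hom_mv W_def t_def)
  have dd: "1 + t * inner (cN p F0) (cP p F0) = d" unfolding t_def tt_def using NP(10) by simp
  have "inner (cN p F0) (W + (t * inner (cN p F0) W) *\<^sub>R cP p F0) = (1 + t * inner (cN p F0) (cP p F0)) * inner (cN p F0) W"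
    by (simp add: inner_add_right algebra_simps)
  then have e1: "inner (cN p F0) (W + (t * inner (cN p F0) W) *\<^sub>R cP p F0) = d * inner (cN p F0) W"
    unfolding dd .
  have e2: "inner (snd F0 $ p 2) (W + (t * inner (cN p F0) W) *\<^sub>R cP p F0) = inner (snd F0 $ p 2) W"
    using NP(8) by (simp add: inner_add_right)
  show ?thesis
    unfolding gpar_gform W' repd_equiv(2)[OF d] fst_conv snd_conv W_def[symmetric]
    unfolding gform_def Let_def cN_def[symmetric] e1 e2
    by (simp add: field_simps)
qed

lemma repd_formula:
  assumes d: "d \<noteq> 0"
  shows "repd p F0 E0 d = (F0,
     ((\<chi> m. fst E0 $ m + (tt p F0 d * inner (cN p F0) (fst E0 $ m)) *\<^sub>R cP p F0),
      (\<chi> m. snd E0 $ m + (tt p F0 (1/d) * inner (snd E0 $ m) (cP p F0)) *\<^sub>R cN p F0)))"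
  by (simp add: repd_def pgl_act_def hom_props(2)[OF d] hom_mv hom_vm)

end



lemma continuous_on_det:
  assumes "continuous_on S f"
  shows "continuous_on S (\<lambda>x. det (f x :: real^'n^'n))"
  unfolding det_def by (intro continuous_intros assms)

lemma continuous_on_if_const:
  "continuous_on S f \<Longrightarrow> continuous_on S g \<Longrightarrow> continuous_on S (\<lambda>x. if b then f x else g x)"
  by (cases b) simp_all

definition DD :: "(4 \<Rightarrow> 4) \<Rightarrow> real^4^4 \<Rightarrow> real^4 \<Rightarrow> real" where
  "DD p V w = det ((\<chi> n. if n = 4 then w else V $ p n) :: real^4^4)"

definition KK :: "(4 \<Rightarrow> 4) \<Rightarrow> real^4^4 \<Rightarrow> real^4" where
  "KK p V = (\<chi> m. DD p V (axis m 1))"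

lemma DD_linear: "DD p V w = inner (KK p V) w"
proof -
  have "DD p V w = det ((\<chi> n. if n = 4 then (\<Sum>m\<in>UNIV. w $ m *s axis m 1) else V $ p n) :: real^4^4)"
    unfolding DD_def basis_expansion ..
  also have "\<dots> = (\<Sum>m\<in>UNIV. det ((\<chi> n. if n = 4 then w $ m *s axis m 1 else V $ p n) :: real^4^4))"
    by (rule det_linear_row_sum) simp
  also have "\<dots> = (\<Sum>m\<in>UNIV. w $ m * DD p V (axis m 1))"
    unfolding DD_def by (rule sum.cong) (simp_all add: det_row_mul)
  also have "\<dots> = inner (KK p V) w"
    by (simp add: KK_def inner_vec_def mult.commute)
  finally show ?thesis .
qed

lemma DD_zero:
  assumes p: "edge_face p" and n: "n = 1 \<or> n = 2 \<or> n = 3"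
  shows "DD p V (V $ p n) = 0"
  unfolding DD_def
proof (rule det_identical_rows[of 4 n])
  show "(4::4) \<noteq> n" using n by auto
  show "row 4 ((\<chi> n'. if n' = 4 then V $ p n else V $ p n') :: real^4^4) =
        row n ((\<chi> n'. if n' = 4 then V $ p n else V $ p n') :: real^4^4)"
    using n by (auto simp: row_def)
qed

lemma DD_nz:
  assumes T: "tetrahedron_of_flags F" and p: "edge_face p"
  shows "DD p (fst F) (fst F $ p 4) \<noteq> 0"
proof -
  define M where "M = ((\<chi> n. fst F $ p n) :: real^4^4)"
  have Mx: "x = 0" if "M *v x = 0" for x
  proof -
    have "\<forall>n. inner (fst F $ p n) x = 0"
      using that by (simp add: vec_eq_iff matrix_vector_mul_component M_def)
    then have "\<forall>m. inner x (fst F $ m) = 0"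
      using ef_all[OF p, of "\<lambda>m. inner x (fst F $ m) = 0"] by (simp add: inner_commute)
    then show ?thesis using tet_ncop[OF T] by blast
  qed
  have "invertible M"
    unfolding invertible_left_inverse matrix_left_invertible_ker using Mx by blast
  then have "det M \<noteq> 0" by (simp add: invertible_det_nz)
  moreover have "((\<chi> n. if n = 4 then fst F $ p 4 else fst F $ p n) :: real^4^4) = M"
    by (simp add: M_def vec_eq_iff)
  ultimately show ?thesis by (simp add: DD_def)
qed

definition cf :: "(4 \<Rightarrow> 4) \<Rightarrow> (4 \<Rightarrow> 4) \<Rightarrow> tet \<times> tet \<Rightarrow> real" where
  "cf p q x = - ((snd (fst x) $ p 1 \<bullet> fst (fst x) $ p 4) * (snd (fst x) $ p 2 \<bullet> fst (fst x) $ p 3)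
      * DD p (fst (fst x)) (fst (snd x) $ q 4)) /
      ((snd (fst x) $ p 1 \<bullet> fst (fst x) $ p 3) * (snd (fst x) $ p 2 \<bullet> fst (snd x) $ q 4)
      * DD p (fst (fst x)) (fst (fst x) $ p 4))"

lemma gpar_cf:
  assumes p: "edge_face p" and q: "edge_face q" and x: "x \<in> FL_rep p q"
  shows "gpar p q x = cf p q x"
proof -
  have T: "tetrahedron_of_flags (fst x)" using x FL_rep_iff by blast
  define V where "V = fst (fst x)"
  define N where "N = plane_cov (V $ p 1) (V $ p 2) (V $ p 3)"
  have NP: "N \<noteq> 0" "inner N (V $ p 1) = 0" "inner N (V $ p 2) = 0" "inner N (V $ p 3) = 0"
    "inner N (V $ p 4) \<noteq> 0" using normal_props[OF T p] unfolding N_def V_def by blast+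
  define K where "K = KK p V"
  have Ko: "inner K (V $ p n) = 0" if "n = 1 \<or> n = 2 \<or> n = 3" for n
    using DD_zero[OF p that, of V] DD_linear unfolding K_def by simp
  define r where "r = inner K (V $ p 4) / inner N (V $ p 4)"
  have KN: "K = r *\<^sub>R N"
    unfolding r_def using prop_normal[of "fst x" p N K] T p NP Ko[of 1] Ko[of 2] Ko[of 3]
    unfolding V_def by simp
  have "DD p V (V $ p 4) \<noteq> 0" using DD_nz[OF T p] V_def by simp
  then have r: "r \<noteq> 0" using DD_linear KN K_def by simp
  have DDN: "DD p V w = r * inner N w" for w using DD_linear KN K_def by simp
  show ?thesis
    unfolding gpar_gform gform_def cf_def Let_def V_def[symmetric] N_def[symmetric] DDN
    using r by (simp add: mult.assoc mult.left_commute[of r])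
qed

lemma cf_cont:
  assumes p: "edge_face p" and q: "edge_face q"
  shows "continuous_on (FL_rep p q) (cf p q)"
proof -
  have den: "(snd (fst x) $ p 1 \<bullet> fst (fst x) $ p 3) * (snd (fst x) $ p 2 \<bullet> fst (snd x) $ q 4)
      * DD p (fst (fst x)) (fst (fst x) $ p 4) \<noteq> 0" if x: "x \<in> FL_rep p q" for x
  proof -
    have T: "tetrahedron_of_flags (fst x)" using x FL_rep_iff by blast
    show ?thesis using tet_nd[OF T] ef_distinct(2)[OF p] gform_nz_parts(2)[OF p q x] DD_nz[OF T p]
      by simp
  qed
  have cDD: "continuous_on S (\<lambda>x. DD p (Vf x) (wf x))"
    if "continuous_on S Vf" "continuous_on S wf" for S and Vf :: "'a::topological_space \<Rightarrow> real^4^4" and wf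
    unfolding DD_def
    by (intro continuous_on_det continuous_on_vec_lambda continuous_on_if_const continuous_on_component that)
  show ?thesis
    unfolding cf_def
    by (intro continuous_intros cDD) (use den in auto)
qed

lemma gp_cont:
  assumes p: "edge_face p" and q: "edge_face q"
  shows "continuous_map (FLq p q) euclideanreal (gluing_param p q)"
  unfolding continuous_map
proof (intro conjI allI impI)
  show "gluing_param p q ` topspace (FLq p q) \<subseteq> topspace euclideanreal" by simp
  fix U :: "real set" assume "openin euclideanreal U"
  then have U: "open U" by simp
  let ?S = "{c \<in> topspace (FLq p q). gluing_param p q c \<in> U}"
  have S: "?S \<subseteq> FL_rep p q // FL_rel p q" by (auto simp: FLq_space)
  have "\<Union>?S = FL_rep p q \<inter> cf p q -` U"
  proof
    show "\<Union>?S \<subseteq> FL_rep p q \<inter> cf p q -` U"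
    proof
      fix x assume "x \<in> \<Union>?S"
      then obtain c where c: "c \<in> FL_rep p q // FL_rel p q" "x \<in> c" "gluing_param p q c \<in> U"
        by (auto simp: FLq_space)
      have xF: "x \<in> FL_rep p q" using class_of(2)[OF c(1,2)] .
      have "gluing_param p q c = cf p q x"
        using class_of(1)[OF c(1,2)] gp_class[OF p xF] gpar_cf[OF p q xF] by simp
      then show "x \<in> FL_rep p q \<inter> cf p q -` U" using c xF by simp
    qed
    show "FL_rep p q \<inter> cf p q -` U \<subseteq> \<Union>?S"
    proof
      fix x assume x: "x \<in> FL_rep p q \<inter> cf p q -` U"
      then have xF: "x \<in> FL_rep p q" by simp
      have "FL_rel p q `` {x} \<in> ?S"
        using x class_in[OF xF] gp_class[OF p xF] gpar_cf[OF p q xF] by (simp add: FLq_space)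
      then show "x \<in> \<Union>?S" using class_self[OF xF] by blast
    qed
  qed
  moreover have "openin (top_of_set (FL_rep p q)) (FL_rep p q \<inter> cf p q -` U)"
    by (rule continuous_openin_preimage_gen[OF cf_cont[OF p q] U])
  ultimately show "openin (FLq p q) ?S" unfolding FLq_open using S by simp
qed



theorem lemma3p2:
  fixes p q :: "4 \<Rightarrow> 4" and F E :: tet
  assumes "edge_face p" and "edge_face q"
    and "tetrahedron_of_flags F" and "tetrahedron_of_flags E"
    and "\<exists>F' E'. pgl_equiv F F' \<and> pgl_equiv E E' \<and> glued p q F' E'"
  shows "homeomorphic_map (subtopology (FLq p q) (Gset p q F E))
           (subtopology euclideanreal (- {0})) (gluing_param p q)"
proof -
  note p = assms(1) and q = assms(2) and TF = assms(3) and TE = assms(4)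
  obtain F0 E0 where e0: "pgl_equiv F F0" "pgl_equiv E E0" "glued p q F0 E0" using assms(5) by blast
  have TF0: "tetrahedron_of_flags F0" using e0(1) tet_act[OF TF] unfolding pgl_equiv_def by blast
  have TE0: "tetrahedron_of_flags E0" using e0(2) tet_act[OF TE] unfolding pgl_equiv_def by blast
  have x0: "(F0, E0) \<in> FL_rep p q" using TF0 TE0 e0(3) by (simp add: FL_rep_def)
  define g0 where "g0 = gpar p q (F0, E0)"
  have g0: "g0 \<noteq> 0" unfolding g0_def by (rule gpar_nz[OF p q x0])
  define G where "G = Gset p q F E"
  define rho where "rho r = repd p F0 E0 (r / g0)" for r
  define h where "h r = FL_rel p q `` {rho r}" for r
  have rho_FL: "rho r \<in> FL_rep p q" if "r \<noteq> 0" for r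
    unfolding rho_def by (rule repd_FL[OF p q x0]) (use that g0 in simp)
  have rho_fst: "fst (rho r) = F0" if "r \<noteq> 0" for r
    unfolding rho_def by (rule repd_equiv(2)[OF p q x0]) (use that g0 in simp)
  have rho_snd: "pgl_equiv E (snd (rho r))" if "r \<noteq> 0" for r
    using pgl_equiv_trans[OF e0(2) repd_equiv(1)[OF p q x0, of "r / g0"]] that g0 unfolding rho_def by simp
  have rho_g: "gpar p q (rho r) = r" if "r \<noteq> 0" for r
    unfolding rho_def using repd_gpar[OF p q x0, of "r / g0"] that g0 by (simp add: g0_def)
  have GQ: "G \<subseteq> FL_rep p q // FL_rel p q" unfolding G_def Gset_def by blast
  have Gx: "\<exists>x. x \<in> FL_rep p q \<and> c = FL_rel p q `` {x} \<and> pgl_equiv F (fst x) \<and> pgl_equiv E (snd x)"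
    if cG: "c \<in> G" for c
  proof -
    obtain x where x: "x \<in> c" "pgl_equiv F (fst x)" "pgl_equiv E (snd x)" and cq: "c \<in> FL_rep p q // FL_rel p q"
      using cG unfolding G_def Gset_def by blast
    show ?thesis using class_of[OF cq x(1)] x by blast
  qed
  have hG: "h r \<in> G" if "r \<noteq> 0" for r
  proof -
    have "h r \<in> FL_rep p q // FL_rel p q" unfolding h_def by (rule class_in[OF rho_FL[OF that]])
    moreover have "rho r \<in> h r" unfolding h_def by (rule class_self[OF rho_FL[OF that]])
    ultimately show ?thesis unfolding G_def Gset_def using rho_fst[OF that] rho_snd[OF that] e0(1) by blast
  qed
  have gh: "gluing_param p q (h r) = r" if "r \<noteq> 0" for r
    unfolding h_def gp_class[OF p rho_FL[OF that]] by (rule rho_g[OF that])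
  have gnz: "gluing_param p q c \<noteq> 0" if cG: "c \<in> G" for c
  proof -
    obtain x where x: "x \<in> FL_rep p q" "c = FL_rel p q `` {x}" using Gx[OF cG] by blast
    show ?thesis unfolding x(2) gp_class[OF p x(1)] by (rule gpar_nz[OF p q x(1)])
  qed
  have hg: "h (gluing_param p q c) = c" if cG: "c \<in> G" for c
  proof -
    obtain x where x: "x \<in> FL_rep p q" "c = FL_rel p q `` {x}" "pgl_equiv F (fst x)" "pgl_equiv E (snd x)"
      using Gx[OF cG] by blast
    define r where "r = gpar p q x"
    have r: "r \<noteq> 0" unfolding r_def by (rule gpar_nz[OF p q x(1)])
    have gc: "gluing_param p q c = r" unfolding x(2) gp_class[OF p x(1)] r_def ..
    have "pgl_equiv2 x (rho r)"
    proof (rule inj_main[OF p q x(1) rho_FL[OF r]])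
      show "pgl_equiv (fst x) (fst (rho r))"
        unfolding rho_fst[OF r] using pgl_equiv_trans[OF pgl_equiv_sym[OF x(3)] e0(1)] .
      show "pgl_equiv (snd x) (snd (rho r))"
        using pgl_equiv_trans[OF pgl_equiv_sym[OF x(4)] rho_snd[OF r]] .
      show "gpar p q x = gpar p q (rho r)" using rho_g[OF r] r_def by simp
    qed
    then have "FL_rel p q `` {x} = FL_rel p q `` {rho r}" by (rule class_eq[OF x(1) rho_FL[OF r]])
    moreover have "h (gluing_param p q c) = FL_rel p q `` {rho r}" unfolding gc h_def ..
    ultimately show ?thesis using x(2) by simp
  qed
  have topG: "topspace (subtopology (FLq p q) G) = G" using GQ by (auto simp: FLq_space)
  have topR: "topspace (subtopology euclideanreal (- {0::real})) = - {0}" by simp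
  have cg: "continuous_map (subtopology (FLq p q) G) (subtopology euclideanreal (- {0})) (gluing_param p q)"
    unfolding continuous_map_in_subtopology
    using continuous_map_from_subtopology[OF gp_cont[OF p q]] gnz topG by auto
  have rho_cont: "continuous_on (- {0}) rho"
  proof -
    have "continuous_on (- {0}) (\<lambda>r. (F0,
     ((\<chi> m. fst E0 $ m + (tt p F0 (r / g0) * inner (cN p F0) (fst E0 $ m)) *\<^sub>R cP p F0),
      (\<chi> m. snd E0 $ m + (tt p F0 (1/(r / g0)) * inner (snd E0 $ m) (cP p F0)) *\<^sub>R cN p F0))))"
      unfolding tt_def using g0 cNP(10)[OF TF0 p] by (intro continuous_intros) auto
    moreover have "\<forall>r \<in> - {0}. rho r = (F0,
     ((\<chi> m. fst E0 $ m + (tt p F0 (r / g0) * inner (cN p F0) (fst E0 $ m)) *\<^sub>R cP p F0),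
      (\<chi> m. snd E0 $ m + (tt p F0 (1/(r / g0)) * inner (snd E0 $ m) (cP p F0)) *\<^sub>R cN p F0)))"
      unfolding rho_def using repd_formula[OF p q x0] g0 by simp
    ultimately show ?thesis using continuous_on_cong by (smt (verit))
  qed
  have ch0: "continuous_map (subtopology euclideanreal (- {0})) (FLq p q) h"
    unfolding continuous_map
  proof (intro conjI allI impI)
    show "h ` topspace (subtopology euclideanreal (- {0})) \<subseteq> topspace (FLq p q)"
      using hG GQ topR by (auto simp: FLq_space)
    fix U assume U: "openin (FLq p q) U"
    then have UQ: "U \<subseteq> FL_rep p q // FL_rel p q" and Uo: "openin (top_of_set (FL_rep p q)) (\<Union>U)"
      unfolding FLq_open by auto
    obtain Op where Op: "open Op" "\<Union>U = FL_rep p q \<inter> Op" using Uo unfolding openin_open by blast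
    have "{r \<in> topspace (subtopology euclideanreal (- {0})). h r \<in> U} = (- {0}) \<inter> rho -` Op"
    proof (intro set_eqI iffI)
      fix r assume "r \<in> {r \<in> topspace (subtopology euclideanreal (- {0})). h r \<in> U}"
      then have r: "r \<noteq> 0" "h r \<in> U" by auto
      then have "rho r \<in> \<Union>U" using class_self[OF rho_FL[OF r(1)]] unfolding h_def by blast
      then show "r \<in> (- {0}) \<inter> rho -` Op" using Op r by auto
    next
      fix r assume "r \<in> (- {0}) \<inter> rho -` Op"
      then have r: "r \<noteq> 0" "rho r \<in> Op" by auto
      then have "rho r \<in> \<Union>U" using Op rho_FL[OF r(1)] by auto
      then obtain c where c: "c \<in> U" "rho r \<in> c" by blast
      then have "c = h r" unfolding h_def using class_of(1)[of c p q "rho r"] UQ by blast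
      then show "r \<in> {r \<in> topspace (subtopology euclideanreal (- {0})). h r \<in> U}" using c r by simp
    qed
    moreover have "openin (top_of_set (- {0})) ((- {0}) \<inter> rho -` Op)"
      by (rule continuous_openin_preimage_gen[OF rho_cont Op(1)])
    ultimately show "openin (subtopology euclideanreal (- {0})) {r \<in> topspace (subtopology euclideanreal (- {0})). h r \<in> U}"
      by simp
  qed
  have ch: "continuous_map (subtopology euclideanreal (- {0})) (subtopology (FLq p q) G) h"
    unfolding continuous_map_in_subtopology using ch0 hG topR by auto
  have "homeomorphic_maps (subtopology (FLq p q) G) (subtopology euclideanreal (- {0})) (gluing_param p q) h"
    unfolding homeomorphic_maps_def using cg ch hg gh topG topR by auto
  then show ?thesis unfolding G_def[symmetric] homeomorphic_map_maps by blast
qed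


end
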